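(* Let $\mu$ be a measure on $\mathbb R$ with infinite support and finite moments $m_k(\mu)=\int t^k\,d\mu(t)$, $k\ge0$. Let $a_n\in\mathbb R_{>0}$ and $b_n\in\mathbb R$ ($n\ge1$) be such that the $n$-th approximant $w_n(z)$ of the continued fraction $\cfrac{a_1}{z+b_1-\cfrac{a_2}{z+b_2-\cfrac{a_3}{z+b_3-\cdots}}}$ satisfies $w_n(z)-\sum_{k=0}^{2n-1}\frac{m_k(\mu)}{z^{k+1}}=o(z^{-2n})$ $(z\to\infty)$ for every $n\ge1$. Let $f(z)$ be a complex-valued function defined on an unbounded subset $\mathfrak X$ of $\mathbb C\cup\{\infty\}$. Then the following are equivalent: (i) $f(z)\sim\sum_{k=0}^\infty\frac{m_k(\mu)}{z^{k+1}}$ $(z\to\infty)_{\mathfrak X}$; (ii) $f(z)\sim\cfrac{a_1}{z+b_1-\cfrac{a_2}{z+b_2-\cfrac{a_3}{z+b_3-\cdots}}}$ $(z\to\infty)_{\mathfrak X}$; (iii) for every $n\ge1$, $f(z)=\cfrac{a_1}{z+b_1-\cfrac{a_2}{\ddots-\cfrac{a_n}{z+b_n-f_n(z)}}}$ for some $f_n$ with $f_n(z)\sim\frac{a_{n+1}}{z}$ $(z\to\infty)_{\mathfrak X}$; (iv) $f(z)-w_n(z)\sim\frac{a_1\cdots a_{n+1}}{z^{2n+1}}$ $(z\to\infty)_{\mathfrak X}$ for all $n\ge0$; (v) $f(z)-w_n(z)=O(z^{-(2n+1)})$ $(z\to\infty)_{\mathfrak X}$ for all $n\ge0$; (vi) $f(z)-w_n(z)=O(z^{-(2n+1)})$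 $(z\to\infty)_{\mathfrak X}$ for infinitely many $n\ge0$; (vii) for every $n\ge0$, $w_n$ is the unique rational function of degree at most $n$ with $f(z)-w(z)=O(z^{-(2n+1)})$ $(z\to\infty)_{\mathfrak X}$; (viii) for every $n\ge1$, $w_n$ is the unique Padé approximant of $f$ over $\mathfrak X$ at $\infty$ of order $[n-1,n]$. In particular, for all $\delta,\varepsilon>0$ the Stieltjes transform $\mathcal S_\mu(z)=\int\frac{d\mu(t)}{z-t}$ satisfies $\mathcal S_\mu(z)\sim\cfrac{a_1}{z+b_1-\cfrac{a_2}{z+b_2-\cdots}}$ $(z\to\infty)_{\mathbb C_{\delta,\varepsilon}}$ over $\mathbb C_{\delta,\varepsilon}=\{z\in\mathbb C:\delta\le|\operatorname{Arg}(z)|\le\pi-\varepsilon\}$.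
   Context: Known fact (Stieltjes/Jacobi theory): for such $\mu$ sequences $a_n>0$, $b_n\in\mathbb R$ as described exist. Asymptotic relations as $z\to\infty$ within $\mathfrak X$: $O$, $o$, $\sim$ on punctured neighbourhoods of $\infty$ intersected with $\mathfrak X$. $f\sim\sum_k c_k/z^{k+1}$ means $f-\sum_{k=0}^n c_k/z^{k+1}=o(z^{-(n+1)})$ for all $n$. For a continued fraction with approximants $v_m$ ($v_0=0$), $f\sim K$ means $\{v_m-v_{m-1}\}_{m\ge1}$ is an asymptotic sequence and $f-v_m=O(v_{m+1}-v_m)$ for all $m\ge0$. Degree of a rational function: max of degrees of numerator and denominator in lowest terms. Padé approximant of order $[n-1,n]$ at $\infty$: the unique $g/h$, $\deg g\le n-1$, $0\ne h$, $\deg h\le n$, with $f-g/h=O(z^{-(2n+1)})$ $(z\to\infty)_{\mathfrak X}$. *)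

theory Defs
  imports "HOL-Analysis.Analysis" "HOL-Library.Landau_Symbols"
    "HOL-Computational_Algebra.Computational_Algebra"
    "HOL-Computational_Algebra.Fraction_Field"
begin

definition at_inf_within :: "complex set \<Rightarrow> complex filter" where
  "at_inf_within X = inf at_infinity (principal X)"

text \<open>Generic continued-fraction block (over any field):
  jfrac a b k n z t = a(k+1)/(z+b(k+1) - a(k+2)/( ... - a(k+n)/(z+b(k+n) - t))),
  and jfrac a b k 0 z t = t.\<close>
fun jfrac :: "(nat \<Rightarrow> 'a::field) \<Rightarrow> (nat \<Rightarrow> 'a) \<Rightarrow> nat \<Rightarrow> nat \<Rightarrow> 'a \<Rightarrow> 'a \<Rightarrow> 'a" where
  "jfrac a b k 0 z t = t"
| "jfrac a b k (Suc n) z t = a (Suc k) / (z + b (Suc k) - jfrac a b (Suc k) n z t)"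

definition wapp :: "(nat \<Rightarrow> real) \<Rightarrow> (nat \<Rightarrow> real) \<Rightarrow> nat \<Rightarrow> complex \<Rightarrow> complex" where
  "wapp a b n z = jfrac (\<lambda>k. complex_of_real (a k)) (\<lambda>k. complex_of_real (b k)) 0 n z 0"

definition wrat :: "(nat \<Rightarrow> real) \<Rightarrow> (nat \<Rightarrow> real) \<Rightarrow> nat \<Rightarrow> complex poly fract" where
  "wrat a b n = jfrac (\<lambda>k. to_fract [:complex_of_real (a k):]) (\<lambda>k. to_fract [:complex_of_real (b k):])
      0 n (to_fract [:0, 1:]) 0"

definition rdeg :: "complex poly fract \<Rightarrow> nat" where
  "rdeg r = (THE d. \<exists>p q. q \<noteq> 0 \<and> coprime p q \<and> r = to_fract p / to_fract q
                        \<and> d = max (degree p) (degree q))"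

text \<open>Evaluation of a rational function (via a representation in lowest terms;
  at poles Isabelle's convention x/0 = 0 applies, irrelevant for asymptotics).\<close>
definition reval :: "complex poly fract \<Rightarrow> complex \<Rightarrow> complex" where
  "reval r z = (THE v. \<exists>p q. q \<noteq> 0 \<and> coprime p q \<and> r = to_fract p / to_fract q
                        \<and> v = poly p z / poly q z)"

definition asymp_series :: "complex filter \<Rightarrow> (complex \<Rightarrow> complex) \<Rightarrow> (nat \<Rightarrow> complex) \<Rightarrow> bool" where
  "asymp_series F f c \<longleftrightarrow>
     (\<forall>n. (\<lambda>z. f z - (\<Sum>k\<le>n. c k / z ^ (k+1))) \<in> o[F](\<lambda>z. inverse (z ^ (n+1))))"

definition asymp_cf :: "complex filter \<Rightarrow> (complex \<Rightarrow> complex) \<Rightarrow> (nat \<Rightarrow> complex \<Rightarrow> complex) \<Rightarrow> bool" where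
  "asymp_cf F f v \<longleftrightarrow>
     (\<forall>m. (\<lambda>z. v (m+2) z - v (m+1) z) \<in> o[F](\<lambda>z. v (m+1) z - v m z)) \<and>
     (\<forall>m. (\<lambda>z. f z - v m z) \<in> O[F](\<lambda>z. v (Suc m) z - v m z))"

definition msupport :: "real measure \<Rightarrow> real set" where
  "msupport \<mu> = {x. \<forall>e>0. emeasure \<mu> {x - e <..< x + e} > 0}"

definition moment :: "real measure \<Rightarrow> nat \<Rightarrow> real" where
  "moment \<mu> k = integral\<^sup>L \<mu> (\<lambda>t. t ^ k)"

definition stieltjes :: "real measure \<Rightarrow> complex \<Rightarrow> complex" where
  "stieltjes \<mu> z = integral\<^sup>L \<mu> (\<lambda>t. 1 / (z - complex_of_real t))"

end

theory Submission imports Defs "HOL-Computational_Algebra.Field_as_Ring" begin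


lemma poly_lead_tendsto:
  "((\<lambda>z::complex. poly p z * inverse (z ^ degree p)) \<longlongrightarrow> lead_coeff p) at_infinity"
proof -
  have "((\<lambda>z::complex. poly (reflect_poly p) (inverse z)) \<longlongrightarrow> poly (reflect_poly p) 0) at_infinity"
    by (intro tendsto_intros tendsto_inverse_0)
  hence "((\<lambda>z::complex. poly (reflect_poly p) (inverse z)) \<longlongrightarrow> lead_coeff p) at_infinity"
    by simp
  moreover have "eventually (\<lambda>z::complex. poly (reflect_poly p) (inverse z) = poly p z * inverse (z ^ degree p)) at_infinity"
    using eventually_not_equal_at_infinity[of 0]
    by eventually_elim (simp add: poly_reflect_poly_nz power_inverse)
  ultimately show ?thesis by (rule Lim_transform_eventually)
qed

lemma poly_ev_nz:
  assumes "(p::complex poly) \<noteq> 0"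
  shows "eventually (\<lambda>z. poly p z \<noteq> 0) at_infinity"
proof -
  have "eventually (\<lambda>z::complex. poly p z * inverse (z ^ degree p) \<noteq> 0) at_infinity"
    using poly_lead_tendsto[of p] assms by (intro tendsto_imp_eventually_ne) auto
  thus ?thesis by eventually_elim auto
qed

lemma pow_bigo:
  assumes "a \<le> b"
  shows "(\<lambda>z::complex. z ^ a) \<in> O[at_infinity](\<lambda>z. z ^ b)"
proof (rule landau_o.bigI[of 1])
  show "eventually (\<lambda>z::complex. norm (z ^ a) \<le> 1 * norm (z ^ b)) at_infinity"
    using eventually_at_infinity[of "\<lambda>z::complex. norm (z ^ a) \<le> 1 * norm (z ^ b)"]
    using assms by (auto simp: norm_power intro!: exI[of _ 1] power_increasing)
qed simp

lemma poly_bigo: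
  assumes F: "F \<le> at_infinity" and "degree p \<le> m"
  shows "(\<lambda>z::complex. poly p z) \<in> O[F](\<lambda>z. z ^ m)"
proof -
  have "(\<lambda>z::complex. poly p z) \<in> O[at_infinity](\<lambda>z. z ^ degree p)"
  proof (rule bigoI_tendsto)
    show "((\<lambda>z::complex. poly p z / z ^ degree p) \<longlongrightarrow> lead_coeff p) at_infinity"
      using poly_lead_tendsto[of p] by (simp add: field_simps)
    show "\<forall>\<^sub>F x in at_infinity. (x::complex) ^ degree p \<noteq> 0"
      using eventually_not_equal_at_infinity[of 0] by eventually_elim simp
  qed
  from landau_o.big_trans[OF this pow_bigo[OF assms(2)]]
  show ?thesis by (rule landau_o.big.filter_mono[OF F])
qed

lemma poly_uniq:
  fixes g1 h1 g2 h2 :: "complex poly"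
  assumes F: "F \<le> at_infinity" "F \<noteq> bot"
    and nz: "h1 \<noteq> 0" "h2 \<noteq> 0"
    and deg: "degree g1 \<le> n" "degree h1 \<le> n" "degree g2 \<le> n" "degree h2 \<le> n"
    and O: "(\<lambda>z. poly g1 z / poly h1 z - poly g2 z / poly h2 z) \<in> O[F](\<lambda>z. inverse (z ^ (2*n+1)))"
  shows "g1 * h2 = g2 * h1"
proof (rule ccontr)
  assume ne: "g1 * h2 \<noteq> g2 * h1"
  define p where "p = g1 * h2 - g2 * h1"
  define q where "q = h1 * h2"
  have pnz: "p \<noteq> 0" using ne by (simp add: p_def)
  have qnz: "q \<noteq> 0" using nz by (simp add: q_def)
  have degq: "degree q \<le> 2*n" unfolding q_def
    using degree_mult_le[of h1 h2] deg by linarith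
  have evq: "eventually (\<lambda>z. poly q z \<noteq> 0) F"
    by (rule filter_leD[OF F(1) poly_ev_nz[OF qnz]])
  have evz: "eventually (\<lambda>z::complex. z \<noteq> 0) F"
    by (rule filter_leD[OF F(1) eventually_not_equal_at_infinity])
  have "(\<lambda>z. poly p z / poly q z) \<in> O[F](\<lambda>z. inverse (z ^ (2*n+1)))"
  proof -
    have ev: "eventually (\<lambda>z. poly g1 z / poly h1 z - poly g2 z / poly h2 z = poly p z / poly q z) F"
      using evq
    proof eventually_elim
      case (elim z)
      hence "poly h1 z \<noteq> 0" "poly h2 z \<noteq> 0" by (auto simp: q_def)
      thus ?case by (simp add: p_def q_def diff_frac_eq)
    qed
    show ?thesis using landau_o.big.in_cong[OF ev] O by (rule iffD1)
  qed
  from landau_o.big.mult[OF this poly_bigo[OF F(1) degq]]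
  have 1: "(\<lambda>z. poly p z / poly q z * poly q z) \<in> O[F](\<lambda>z. inverse (z ^ (2*n+1)) * z ^ (2*n))" .
  have e1: "eventually (\<lambda>z. poly p z / poly q z * poly q z = poly p z) F"
    using evq by eventually_elim simp
  have e2: "eventually (\<lambda>z::complex. inverse (z ^ (2*n+1)) * z ^ (2*n) = inverse (z ^ 1)) F"
    using evz by eventually_elim (simp add: field_simps)
  have "(\<lambda>z. poly p z) \<in> O[F](\<lambda>z. inverse (z ^ 1))"
    using 1 unfolding landau_o.big.in_cong[OF e1] landau_o.big.cong[OF e2] .
  moreover have "(\<lambda>z::complex. inverse (z ^ 1)) \<in> o[F](\<lambda>z. inverse (z ^ 0))"
  proof (rule smalloI_tendsto)
    have "((\<lambda>z::complex. inverse z) \<longlongrightarrow> 0) F"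
      using tendsto_inverse_0 F(1) by (rule tendsto_mono[rotated])
    thus "((\<lambda>z::complex. inverse (z ^ 1) / inverse (z ^ 0)) \<longlongrightarrow> 0) F" by simp
  qed simp
  ultimately have "(\<lambda>z. poly p z) \<in> o[F](\<lambda>z. inverse (z ^ 0))" by (rule landau_o.big_small_trans)
  from smalloD_tendsto[OF this] have t0: "((\<lambda>z. poly p z) \<longlongrightarrow> 0) F" by simp
  have "((\<lambda>z::complex. (inverse z) ^ degree p) \<longlongrightarrow> 0 ^ degree p) F"
    using tendsto_inverse_0 F(1) by (intro tendsto_intros) (rule tendsto_mono[rotated])
  from tendsto_mult[OF t0 this]
  have "((\<lambda>z. poly p z * inverse (z ^ degree p)) \<longlongrightarrow> 0) F" by (simp add: power_inverse)
  moreover have "((\<lambda>z. poly p z * inverse (z ^ degree p)) \<longlongrightarrow> lead_coeff p) F"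
    using poly_lead_tendsto F(1) by (rule tendsto_mono[rotated])
  ultimately have "lead_coeff p = 0" using tendsto_unique[OF F(2)] by blast
  with pnz show False by simp
qed


lemma fract_eq_iff:
  fixes g h P Q :: "complex poly"
  assumes "h \<noteq> 0" "Q \<noteq> 0"
  shows "to_fract g / to_fract h = to_fract P / to_fract Q \<longleftrightarrow> g * Q = P * h"
proof -
  have "to_fract g / to_fract h = to_fract P / to_fract Q \<longleftrightarrow> to_fract g * to_fract Q = to_fract P * to_fract h"
    using assms by (simp add: frac_eq_eq)
  also have "\<dots> \<longleftrightarrow> g * Q = P * h" by (simp flip: to_fract_mult)
  finally show ?thesis .
qed

lemma rep_exists:
  "\<exists>p q. q \<noteq> 0 \<and> coprime p q \<and> (r::complex poly fract) = to_fract p / to_fract q"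
proof (intro exI conjI)
  show "snd (quot_of_fract r) \<noteq> 0" by (rule snd_quot_of_fract_nonzero)
  show "coprime (fst (quot_of_fract r)) (snd (quot_of_fract r))" by (rule coprime_quot_of_fract)
  show "r = to_fract (fst (quot_of_fract r)) / to_fract (snd (quot_of_fract r))"
    using Fract_quot_of_fract[of r] by (simp add: Fract_conv_to_fract)
qed

lemma rep_unique:
  fixes p q p' q' :: "complex poly"
  assumes "q \<noteq> 0" "coprime p q" "q' \<noteq> 0" "coprime p' q'"
    and eq: "to_fract p / to_fract q = to_fract p' / to_fract q'"
  shows "max (degree p) (degree q) = max (degree p') (degree q')"
    and "poly p z / poly q z = poly p' z / poly q' z"
proof -
  have E: "p * q' = p' * q" using eq fract_eq_iff[OF assms(1,3)] by simp
  have "q dvd p * q'" using E by simp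
  moreover have "coprime q p" using assms(2) coprime_commute by blast
  ultimately have qq: "q dvd q'" using coprime_dvd_mult_right_iff[of q p q'] by simp
  have "q' dvd p' * q" using E[symmetric] by simp
  moreover have "coprime q' p'" using assms(4) coprime_commute by blast
  ultimately have qq': "q' dvd q" using coprime_dvd_mult_right_iff[of q' p' q] by simp
  have dq: "degree q = degree q'"
    using dvd_imp_degree_le[OF qq assms(3)] dvd_imp_degree_le[OF qq' assms(1)] by simp
  have dp: "degree p = degree p'"
  proof (cases "p = 0")
    case True
    hence "p' = 0" using E assms(1) by simp
    thus ?thesis using True by simp
  next
    case False
    hence p'nz: "p' \<noteq> 0" using E assms(3) by auto
    have "p dvd p' * q" using E by (metis dvd_triv_left)
    hence pp: "p dvd p'" using assms(2) by (simp add: coprime_dvd_mult_left_iff)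
    have "p' dvd p * q'" using E by (metis dvd_triv_left)
    hence pp': "p' dvd p" using assms(4) by (simp add: coprime_dvd_mult_left_iff)
    show ?thesis using dvd_imp_degree_le[OF pp p'nz] dvd_imp_degree_le[OF pp' False] by simp
  qed
  show "max (degree p) (degree q) = max (degree p') (degree q')" using dp dq by simp
  show "poly p z / poly q z = poly p' z / poly q' z"
  proof (cases "poly q z = 0")
    case True
    from qq obtain k where "q' = q * k" by (auto elim: dvdE)
    hence "poly q' z = 0" using True by simp
    thus ?thesis using True by simp
  next
    case False
    from qq' obtain k where "q = q' * k" by (auto elim: dvdE)
    hence "poly q' z \<noteq> 0" using False by auto
    moreover have "poly p z * poly q' z = poly p' z * poly q z" using arg_cong[OF E, of "\<lambda>r. poly r z"] by simp
    ultimately show ?thesis using False by (simp add: field_simps)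
  qed
qed

lemma rdeg_rep:
  fixes p q :: "complex poly"
  assumes "q \<noteq> 0" "coprime p q" "r = to_fract p / to_fract q"
  shows "rdeg r = max (degree p) (degree q)" "reval r z = poly p z / poly q z"
proof -
  show "rdeg r = max (degree p) (degree q)"
    unfolding rdeg_def
  proof (rule the_equality)
    show "\<exists>p' q'. q' \<noteq> 0 \<and> coprime p' q' \<and> r = to_fract p' / to_fract q' \<and> max (degree p) (degree q) = max (degree p') (degree q')"
      using assms by blast
  next
    fix d assume "\<exists>p' q'. q' \<noteq> 0 \<and> coprime p' q' \<and> r = to_fract p' / to_fract q' \<and> d = max (degree p') (degree q')"
    then obtain p' q' where "q' \<noteq> 0" "coprime p' q'" "r = to_fract p' / to_fract q'" "d = max (degree p') (degree q')"
      by blast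
    thus "d = max (degree p) (degree q)" using rep_unique(1)[OF assms(1,2), of q' p'] assms(3) by simp
  qed
  show "reval r z = poly p z / poly q z"
    unfolding reval_def
  proof (rule the_equality)
    show "\<exists>p' q'. q' \<noteq> 0 \<and> coprime p' q' \<and> r = to_fract p' / to_fract q' \<and> poly p z / poly q z = poly p' z / poly q' z"
      using assms by blast
  next
    fix v assume "\<exists>p' q'. q' \<noteq> 0 \<and> coprime p' q' \<and> r = to_fract p' / to_fract q' \<and> v = poly p' z / poly q' z"
    then obtain p' q' where "q' \<noteq> 0" "coprime p' q'" "r = to_fract p' / to_fract q'" "v = poly p' z / poly q' z"
      by blast
    thus "v = poly p z / poly q z" using rep_unique(2)[OF assms(1,2), of q' p'] assms(3) by simp
  qed
qed

lemma rdeg_le: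
  fixes P Q :: "complex poly"
  assumes "Q \<noteq> 0" "r = to_fract P / to_fract Q"
  shows "rdeg r \<le> max (degree P) (degree Q)"
    and "poly Q z \<noteq> 0 \<Longrightarrow> reval r z = poly P z / poly Q z"
proof -
  define d where "d = gcd P Q"
  define p where "p = P div d"
  define q where "q = Q div d"
  have dnz: "d \<noteq> 0" using assms(1) by (simp add: d_def)
  have Pd: "P = p * d" unfolding p_def d_def by simp
  have Qd: "Q = q * d" unfolding q_def d_def by simp
  have qnz: "q \<noteq> 0" using Qd assms(1) by auto
  have cop: "coprime p q" unfolding p_def q_def d_def using assms(1) by (intro div_gcd_coprime) simp
  have r: "r = to_fract p / to_fract q"
    using assms(2) dnz qnz by (simp add: Pd Qd)
  note R = rdeg_rep[OF qnz cop r]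
  have "degree q \<le> degree Q" using Qd assms(1) by (intro dvd_imp_degree_le) simp_all
  moreover have "degree p \<le> degree P"
  proof (cases "P = 0")
    case True thus ?thesis by (simp add: Pd dnz)
  next
    case False thus ?thesis using Pd by (intro dvd_imp_degree_le) simp_all
  qed
  ultimately show "rdeg r \<le> max (degree P) (degree Q)" using R(1) by linarith
  assume "poly Q z \<noteq> 0"
  hence "poly d z \<noteq> 0" "poly q z \<noteq> 0" using Qd by auto
  thus "reval r z = poly P z / poly Q z" using R(2)[of z] by (simp add: Pd Qd)
qed


lemma jrep:
  fixes a b :: "nat \<Rightarrow> real"
  shows "\<exists>P Q. jfrac (\<lambda>k. to_fract [:complex_of_real (a k):]) (\<lambda>k. to_fract [:complex_of_real (b k):]) k n (to_fract [:0,1:]) 0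
              = to_fract P / to_fract Q
    \<and> degree Q = n \<and> lead_coeff Q = 1 \<and> (P = 0 \<or> degree P < n)
    \<and> eventually (\<lambda>z. jfrac (\<lambda>k. complex_of_real (a k)) (\<lambda>k. complex_of_real (b k)) k n z 0 = poly P z / poly Q z) at_infinity"
proof (induction n arbitrary: k)
  case 0
  show ?case by (rule exI[of _ 0], rule exI[of _ 1]) simp
next
  case (Suc n)
  obtain P Q where PQ: "jfrac (\<lambda>k. to_fract [:complex_of_real (a k):]) (\<lambda>k. to_fract [:complex_of_real (b k):]) (Suc k) n (to_fract [:0,1:]) 0
              = to_fract P / to_fract Q"
    "degree Q = n" "lead_coeff Q = 1" "P = 0 \<or> degree P < n"
    "eventually (\<lambda>z. jfrac (\<lambda>k. complex_of_real (a k)) (\<lambda>k. complex_of_real (b k)) (Suc k) n z 0 = poly P z / poly Q z) at_infinity"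
    using Suc.IH[of "Suc k"] by blast
  define A where "A = complex_of_real (a (Suc k))"
  define B where "B = complex_of_real (b (Suc k))"
  define Q' where "Q' = - P + [:B, 1:] * Q"
  define P' where "P' = smult A Q"
  have Qnz: "Q \<noteq> 0" using PQ(3) by auto
  have d1: "degree ([:B, 1:] * Q) = Suc n" using Qnz PQ(2) by (subst degree_mult_eq) auto
  have l1: "lead_coeff ([:B, 1:] * Q) = 1" using PQ(3) by (simp only: lead_coeff_mult) simp
  have dP: "degree (- P) < degree ([:B, 1:] * Q)" using PQ(4) d1 by auto
  have dQ': "degree Q' = Suc n" unfolding Q'_def using degree_add_eq_right[OF dP] d1 by simp
  have lQ': "lead_coeff Q' = 1" unfolding Q'_def using lead_coeff_add_le[OF dP] l1 by simp
  have Q'nz: "Q' \<noteq> 0" using lQ' by auto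
  have dP': "P' = 0 \<or> degree P' < Suc n"
    using degree_smult_le[of A Q] PQ(2) by (auto simp: P'_def)
  have fr: "jfrac (\<lambda>k. to_fract [:complex_of_real (a k):]) (\<lambda>k. to_fract [:complex_of_real (b k):]) k (Suc n) (to_fract [:0,1:]) 0
      = to_fract P' / to_fract Q'"
  proof -
    have X: "to_fract [:0, 1:] + to_fract [:B:] = to_fract [:B, 1:]"
      by (simp flip: to_fract_add)
    have xnz: "to_fract Q \<noteq> 0" "to_fract Q' \<noteq> 0" using Qnz Q'nz by simp_all
    have TQ: "to_fract Q' = to_fract [:B,1:] * to_fract Q - to_fract P"
      unfolding Q'_def by (simp only: to_fract_add to_fract_mult to_fract_uminus) simp
    have "to_fract [:B, 1:] - to_fract P / to_fract Q = to_fract Q' / to_fract Q"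
      using xnz(1) unfolding TQ by (simp add: field_simps)
    hence "to_fract [:A:] / (to_fract [:B, 1:] - to_fract P / to_fract Q) = to_fract [:A:] * to_fract Q / to_fract Q'"
      using xnz by simp
    also have "\<dots> = to_fract P' / to_fract Q'" by (simp add: P'_def flip: to_fract_mult)
    finally show ?thesis using PQ(1) X by (simp add: A_def B_def)
  qed
  have ev: "eventually (\<lambda>z. jfrac (\<lambda>k. complex_of_real (a k)) (\<lambda>k. complex_of_real (b k)) k (Suc n) z 0 = poly P' z / poly Q' z) at_infinity"
    using PQ(5) poly_ev_nz[OF Qnz] poly_ev_nz[OF Q'nz]
  proof eventually_elim
    case (elim z)
    have q': "poly Q' z = (z + B) * poly Q z - poly P z" by (simp add: Q'_def algebra_simps)
    have d: "z + B - poly P z / poly Q z = poly Q' z / poly Q z"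
      unfolding q' using elim(2) by (simp add: field_simps)
    have "jfrac (\<lambda>k. complex_of_real (a k)) (\<lambda>k. complex_of_real (b k)) k (Suc n) z 0
        = A / (z + B - poly P z / poly Q z)" using elim(1) by (simp add: A_def B_def)
    also have "\<dots> = A * poly Q z / poly Q' z" unfolding d using elim(2,3) by simp
    also have "\<dots> = poly P' z / poly Q' z" by (simp add: P'_def)
    finally show ?case .
  qed
  show ?case using fr dQ' lQ' dP' ev by blast
qed



lemma at_inf_within_le: "at_inf_within X \<le> at_infinity"
  by (simp add: at_inf_within_def)

lemma ev_nz: "F \<le> at_infinity \<Longrightarrow> eventually (\<lambda>z::complex. z \<noteq> 0) F"
  using eventually_not_equal_at_infinity filter_leD by blast

lemma inv_pow_smallo:
  assumes "q < p" "F \<le> at_infinity"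
  shows "(\<lambda>z::complex. inverse (z ^ p)) \<in> o[F](\<lambda>z. inverse (z ^ q))"
proof (rule smalloI_tendsto)
  have "((\<lambda>z::complex. (inverse z) ^ (p - q)) \<longlongrightarrow> 0 ^ (p - q)) at_infinity"
    by (intro tendsto_intros tendsto_inverse_0)
  hence "((\<lambda>z::complex. (inverse z) ^ (p - q)) \<longlongrightarrow> 0) at_infinity"
    using assms(1) by (simp add: power_0_left)
  hence "((\<lambda>z::complex. (inverse z) ^ (p - q)) \<longlongrightarrow> 0) F"
    using assms(2) by (rule tendsto_mono[rotated])
  moreover have "eventually (\<lambda>z. (inverse z) ^ (p - q) = inverse (z ^ p) / inverse (z ^ q)) F"
    using ev_nz[OF assms(2)]
  proof eventually_elim
    case (elim z)
    have "z ^ p = z ^ (p - q) * z ^ q" using assms(1)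
      by (metis le_add_diff_inverse2 less_imp_le power_add)
    thus ?case using elim by (simp add: field_simps power_inverse)
  qed
  ultimately show "((\<lambda>z. inverse (z ^ p) / inverse (z ^ q)) \<longlongrightarrow> 0) F"
    by (rule Lim_transform_eventually)
  show "\<forall>\<^sub>F x in F. inverse (x ^ q) \<noteq> 0" using ev_nz[OF assms(2)] by eventually_elim simp
qed

lemma inv_pow_bigo:
  assumes "q \<le> p" "F \<le> at_infinity"
  shows "(\<lambda>z::complex. inverse (z ^ p)) \<in> O[F](\<lambda>z. inverse (z ^ q))"
  using assms inv_pow_smallo[of q p F] by (cases "q = p") (auto intro: landau_o.small_imp_big)

lemma const_smallo_z:
  assumes "F \<le> at_infinity"
  shows "(\<lambda>z::complex. c) \<in> o[F](\<lambda>z. z)"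
proof (rule smalloI_tendsto)
  have "((\<lambda>z::complex. c * inverse z) \<longlongrightarrow> c * 0) at_infinity"
    by (intro tendsto_intros tendsto_inverse_0)
  hence "((\<lambda>z::complex. c * inverse z) \<longlongrightarrow> 0) F"
    using assms by (auto intro: tendsto_mono)
  thus "((\<lambda>z. c / z) \<longlongrightarrow> 0) F" by (simp add: field_simps)
  show "\<forall>\<^sub>F x in F. x \<noteq> 0" using ev_nz[OF assms] .
qed

lemma tendsto0_smallo_z:
  assumes "F \<le> at_infinity" "(g \<longlongrightarrow> (c::complex)) F"
  shows "g \<in> o[F](\<lambda>z. z)"
proof (rule smalloI_tendsto)
  have "((\<lambda>z::complex. inverse z) \<longlongrightarrow> 0) F"
    using assms tendsto_inverse_0 by (auto intro: tendsto_mono)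
  from tendsto_mult[OF assms(2) this]
  show "((\<lambda>z. g z / z) \<longlongrightarrow> 0) F" by (simp add: field_simps)
  show "\<forall>\<^sub>F x in F. x \<noteq> 0" using ev_nz[OF assms(1)] .
qed

lemma div_z_tendsto:
  assumes "F \<le> at_infinity"
  shows "((\<lambda>z::complex. c / z) \<longlongrightarrow> 0) F"
proof -
  have "((\<lambda>z::complex. c * inverse z) \<longlongrightarrow> c * 0) at_infinity"
    by (intro tendsto_intros tendsto_inverse_0)
  hence "((\<lambda>z::complex. c * inverse z) \<longlongrightarrow> 0) F"
    using assms by (auto intro: tendsto_mono)
  thus ?thesis by (simp add: field_simps)
qed

lemma asymp_equiv_filter_mono: "f \<sim>[G] g \<Longrightarrow> F \<le> G \<Longrightarrow> f \<sim>[F] g"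
  unfolding asymp_equiv_def by (rule tendsto_mono)

lemma jfrac_comp: "jfrac a b k (n + m) z t = jfrac a b k n z (jfrac a b (k + n) m z t)"
  by (induction n arbitrary: k) simp_all

lemma theta_c_inv:
  assumes "c \<noteq> 0"
  shows "(\<lambda>z::complex. c / z ^ m) \<in> \<Theta>[F](\<lambda>z. inverse (z ^ m))"
proof -
  have "(\<lambda>z::complex. c * inverse (z ^ m)) \<in> \<Theta>[F](\<lambda>z. inverse (z ^ m))"
    using assms by (subst landau_theta.cmult_in_iff) auto
  thus ?thesis by (simp add: field_simps)
qed

lemma c_inv_bigo: "(\<lambda>z::complex. c / z ^ m) \<in> O[F](\<lambda>z. inverse (z ^ m))"
proof (cases "c = 0")
  case False
  thus ?thesis using theta_c_inv[OF False] by blast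
qed simp

lemma S_diff:
  assumes F: "F \<le> at_infinity" and "n \<le> N"
  shows "(\<lambda>z::complex. (\<Sum>k\<le>N. c k / z ^ (k+1)) - (\<Sum>k\<le>n. c k / z ^ (k+1))) \<in> O[F](\<lambda>z. inverse (z ^ (n+2)))"
  using assms(2)
proof (induction N rule: dec_induct)
  case base
  show ?case by simp
next
  case (step N)
  have "(\<lambda>z::complex. c (Suc N) / z ^ (Suc N + 1)) \<in> O[F](\<lambda>z. inverse (z ^ (Suc N + 1)))"
    by (rule c_inv_bigo)
  moreover have "(\<lambda>z::complex. inverse (z ^ (Suc N + 1))) \<in> O[F](\<lambda>z. inverse (z ^ (n+2)))"
    using step(1) by (intro inv_pow_bigo F) simp
  ultimately have "(\<lambda>z::complex. c (Suc N) / z ^ (Suc N + 1)) \<in> O[F](\<lambda>z. inverse (z ^ (n+2)))"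
    by (rule landau_o.big_trans)
  from sum_in_bigo(1)[OF step(3) this] show ?case by (simp add: algebra_simps)
qed

fun jinv :: "(nat \<Rightarrow> 'a::field) \<Rightarrow> (nat \<Rightarrow> 'a) \<Rightarrow> nat \<Rightarrow> nat \<Rightarrow> 'a \<Rightarrow> 'a \<Rightarrow> 'a" where
  "jinv a b k 0 z v = v"
| "jinv a b k (Suc n) z v = jinv a b (Suc k) n z (z + b (Suc k) - a (Suc k) / v)"

lemma jinv_correct:
  assumes "\<And>i. a (Suc i) \<noteq> 0"
  shows "jfrac a b k n z (jinv a b k n z v) = v"
proof (induction n arbitrary: k v)
  case (Suc n)
  show ?case using Suc.IH assms[of k] by simp
qed simp

lemma jinv_Suc: "jinv a b k (Suc n) z v = z + b (Suc (k+n)) - a (Suc (k+n)) / jinv a b k n z v"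
  by (induction n arbitrary: k v) simp_all

context
  fixes a b :: "nat \<Rightarrow> real"
  assumes anz: "\<And>n. n \<ge> 1 \<Longrightarrow> a n \<noteq> 0"
begin

abbreviation "ac \<equiv> (\<lambda>k. complex_of_real (a k))"
abbreviation "bc \<equiv> (\<lambda>k. complex_of_real (b k))"
abbreviation "J \<equiv> jfrac ac bc"

lemma J_asym:
  assumes F: "F \<le> at_infinity" and t: "(t \<longlongrightarrow> 0) F"
  shows "(\<lambda>z. J k (Suc n) z (t z)) \<sim>[F] (\<lambda>z. ac (Suc k) / z)
       \<and> ((\<lambda>z. J k n z (t z)) \<longlongrightarrow> 0) F
       \<and> (\<lambda>z. z + bc (Suc k) - J (Suc k) n z (t z)) \<sim>[F] (\<lambda>z. z)"
proof (induction n arbitrary: k)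
  case 0
  have D: "(\<lambda>z. z + bc (Suc k) - J (Suc k) 0 z (t z)) \<sim>[F] (\<lambda>z. z)"
  proof -
    have "(\<lambda>z. bc (Suc k) - t z) \<in> o[F](\<lambda>z. z)"
      by (rule tendsto0_smallo_z[OF F tendsto_diff[OF tendsto_const t]])
    hence "(\<lambda>z. z + (bc (Suc k) - t z)) \<sim>[F] (\<lambda>z. z)"
      by (subst asymp_equiv_add_right) auto
    thus ?thesis by (simp add: algebra_simps)
  qed
  have "(\<lambda>z. J k (Suc 0) z (t z)) \<sim>[F] (\<lambda>z. ac (Suc k) / z)"
    using asymp_equiv_divide[OF asymp_equiv_refl[of "\<lambda>_. ac (Suc k)"] D] by simp
  with D t show ?case by simp
next
  case (Suc n)
  from Suc.IH[of "Suc k"] have IH1: "(\<lambda>z. J (Suc k) (Suc n) z (t z)) \<sim>[F] (\<lambda>z. ac (Suc (Suc k)) / z)"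
    by blast
  have "((\<lambda>z. ac (Suc (Suc k)) / z) \<longlongrightarrow> 0) F" by (rule div_z_tendsto[OF F])
  hence T: "((\<lambda>z. J (Suc k) (Suc n) z (t z)) \<longlongrightarrow> 0) F"
    using IH1 asymp_equiv_tendsto_transfer asymp_equiv_sym by blast
  have D: "(\<lambda>z. z + bc (Suc k) - J (Suc k) (Suc n) z (t z)) \<sim>[F] (\<lambda>z. z)"
  proof -
    have "(\<lambda>z. bc (Suc k) - J (Suc k) (Suc n) z (t z)) \<in> o[F](\<lambda>z. z)"
      by (rule tendsto0_smallo_z[OF F tendsto_diff[OF tendsto_const T]])
    hence "(\<lambda>z. z + (bc (Suc k) - J (Suc k) (Suc n) z (t z))) \<sim>[F] (\<lambda>z. z)"
      by (subst asymp_equiv_add_right) auto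
    thus ?thesis by (simp add: algebra_simps)
  qed
  have E: "(\<lambda>z. J k (Suc (Suc n)) z (t z)) \<sim>[F] (\<lambda>z. ac (Suc k) / z)"
    using asymp_equiv_divide[OF asymp_equiv_refl[of "\<lambda>_. ac (Suc k)"] D] by simp
  from Suc.IH[of k] have "(\<lambda>z. J k (Suc n) z (t z)) \<sim>[F] (\<lambda>z. ac (Suc k) / z)" by blast
  have "((\<lambda>z. ac (Suc k) / z) \<longlongrightarrow> 0) F" by (rule div_z_tendsto[OF F])
  hence "((\<lambda>z. J k (Suc n) z (t z)) \<longlongrightarrow> 0) F"
    using \<open>(\<lambda>z. J k (Suc n) z (t z)) \<sim>[F] _\<close> asymp_equiv_tendsto_transfer asymp_equiv_sym by blast
  with E D show ?case by blast
qed


lemma J_diff: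
  assumes F: "F \<le> at_infinity" and t: "(t \<longlongrightarrow> 0) F" and s: "(s \<longlongrightarrow> 0) F"
  shows "(\<lambda>z. J k n z (t z) - J k n z (s z)) \<sim>[F]
         (\<lambda>z. (t z - s z) * (\<Prod>i<n. ac (Suc (k+i))) / z ^ (2*n))"
proof (induction n arbitrary: k)
  case 0
  show ?case by simp
next
  case (Suc n)
  define Dt where "Dt = (\<lambda>z. z + bc (Suc k) - J (Suc k) n z (t z))"
  define Ds where "Ds = (\<lambda>z. z + bc (Suc k) - J (Suc k) n z (s z))"
  have Dt: "Dt \<sim>[F] (\<lambda>z. z)" unfolding Dt_def using J_asym[OF F t] by blast
  have Ds: "Ds \<sim>[F] (\<lambda>z. z)" unfolding Ds_def using J_asym[OF F s] by blast
  have evt: "eventually (\<lambda>z. Dt z \<noteq> 0) F"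
    using asymp_equiv_eventually_zeros[OF Dt] ev_nz[OF F] by eventually_elim auto
  have evs: "eventually (\<lambda>z. Ds z \<noteq> 0) F"
    using asymp_equiv_eventually_zeros[OF Ds] ev_nz[OF F] by eventually_elim auto
  have "(\<lambda>z. ac (Suc k) * (J (Suc k) n z (t z) - J (Suc k) n z (s z)) / (Dt z * Ds z)) \<sim>[F]
        (\<lambda>z. ac (Suc k) * ((t z - s z) * (\<Prod>i<n. ac (Suc (Suc k+i))) / z ^ (2*n)) / (z * z))"
    by (intro asymp_equiv_intros Suc.IH Dt Ds)
  moreover have "eventually (\<lambda>z. ac (Suc k) * (J (Suc k) n z (t z) - J (Suc k) n z (s z)) / (Dt z * Ds z)
      = J k (Suc n) z (t z) - J k (Suc n) z (s z)) F"
    using evt evs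
  proof eventually_elim
    case (elim z)
    have 0: "J (Suc k) n z (t z) - J (Suc k) n z (s z) = Ds z - Dt z" by (simp add: Dt_def Ds_def)
    have 1: "J k (Suc n) z (t z) = ac (Suc k) / Dt z" by (simp add: Dt_def)
    have 2: "J k (Suc n) z (s z) = ac (Suc k) / Ds z" by (simp add: Ds_def)
    have "ac (Suc k) * (Ds z - Dt z) / (Dt z * Ds z) = ac (Suc k) / Dt z - ac (Suc k) / Ds z"
      using elim by (simp add: field_simps)
    thus ?case by (simp only: 0 1 2)
  qed
  moreover have "eventually (\<lambda>z. ac (Suc k) * ((t z - s z) * (\<Prod>i<n. ac (Suc (Suc k+i))) / z ^ (2*n)) / (z * z)
      = (t z - s z) * (\<Prod>i<Suc n. ac (Suc (k+i))) / z ^ (2*Suc n)) F"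
    using ev_nz[OF F]
  proof eventually_elim
    case (elim z)
    have "(\<Prod>i<Suc n. ac (Suc (k+i))) = ac (Suc k) * (\<Prod>i<n. ac (Suc (Suc k+i)))"
      by (subst prod.lessThan_Suc_shift) simp
    thus ?case using elim by (simp add: field_simps power2_eq_square)
  qed
  ultimately show ?case by (rule asymp_equiv_transfer)
qed


abbreviation "w \<equiv> wapp a b"

lemma w_J: "w n z = J 0 n z 0"
  by (simp add: wapp_def)

lemma Pn_nz: "(\<Prod>i<n. ac (Suc i)) \<noteq> 0"
  using anz by (auto simp: prod_zero_iff)

lemma w_step:
  assumes F: "F \<le> at_infinity"
  shows "(\<lambda>z. w (Suc n) z - w n z) \<sim>[F] (\<lambda>z. (\<Prod>i<Suc n. ac (Suc i)) / z ^ (2*n+1))"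
proof -
  define t where "t = (\<lambda>z. J n (Suc 0) z 0)"
  have A: "t \<sim>[F] (\<lambda>z. ac (Suc n) / z)" "(t \<longlongrightarrow> 0) F"
    using J_asym[OF F tendsto_const, of n 0] J_asym[OF F tendsto_const, of n "Suc 0"]
    unfolding t_def by blast+
  have B: "(\<lambda>z. J 0 n z (t z) - J 0 n z 0) \<sim>[F] (\<lambda>z. (t z - 0) * (\<Prod>i<n. ac (Suc (0+i))) / z ^ (2*n))"
    by (rule J_diff[OF F A(2) tendsto_const])
  have C: "(\<lambda>z. (t z - 0) * (\<Prod>i<n. ac (Suc (0+i))) / z ^ (2*n)) \<sim>[F]
       (\<lambda>z. (ac (Suc n) / z) * (\<Prod>i<n. ac (Suc (0+i))) / z ^ (2*n))"
    by (intro asymp_equiv_intros) (simp add: A(1))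
  have D: "eventually (\<lambda>z. (ac (Suc n) / z) * (\<Prod>i<n. ac (Suc (0+i))) / z ^ (2*n) =
      (\<Prod>i<Suc n. ac (Suc i)) / z ^ (2*n+1)) F"
    using ev_nz[OF F] by eventually_elim (simp add: field_simps)
  have E: "\<And>z. J 0 n z (t z) - J 0 n z 0 = w (Suc n) z - w n z"
    unfolding w_J t_def using jfrac_comp[of ac bc 0 n "Suc 0"] by simp
  show ?thesis
    using asymp_equiv_transfer[OF asymp_equiv_trans[OF B C] always_eventually[OF allI[OF E]] D] .
qed

lemma w_step_theta:
  assumes F: "F \<le> at_infinity"
  shows "(\<lambda>z. w (Suc n) z - w n z) \<in> \<Theta>[F](\<lambda>z. inverse (z ^ (2*n+1)))"
  using landau_theta.trans[OF asymp_equiv_imp_bigtheta[OF w_step[OF F]] theta_c_inv[OF Pn_nz]] .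

lemma w_diff_bigo:
  assumes F: "F \<le> at_infinity" and "n \<le> m"
  shows "(\<lambda>z. w m z - w n z) \<in> O[F](\<lambda>z. inverse (z ^ (2*n+1)))"
  using assms(2)
proof (induction m rule: dec_induct)
  case base
  show ?case by simp
next
  case (step m)
  have "(\<lambda>z. w (Suc m) z - w m z) \<in> O[F](\<lambda>z. inverse (z ^ (2*m+1)))"
    using w_step_theta[OF F] by blast
  moreover have "(\<lambda>z::complex. inverse (z ^ (2*m+1))) \<in> O[F](\<lambda>z. inverse (z ^ (2*n+1)))"
    using step(1) by (intro inv_pow_bigo F) simp
  ultimately have "(\<lambda>z. w (Suc m) z - w m z) \<in> O[F](\<lambda>z. inverse (z ^ (2*n+1)))"
    by (rule landau_o.big_trans)
  from sum_in_bigo(1)[OF this step(3)] show ?case by simp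
qed


lemma P2_iff:
  assumes F: "F \<le> at_infinity"
  shows "asymp_cf F f w \<longleftrightarrow> (\<forall>n. (\<lambda>z. f z - w n z) \<in> O[F](\<lambda>z. inverse (z ^ (2*n+1))))"
proof -
  have 1: "(\<lambda>z. w (m+2) z - w (m+1) z) \<in> o[F](\<lambda>z. w (m+1) z - w m z)" for m
  proof -
    have "(\<lambda>z. w (Suc (Suc m)) z - w (Suc m) z) \<in> \<Theta>[F](\<lambda>z. inverse (z ^ (2*Suc m+1)))"
      by (rule w_step_theta[OF F])
    moreover have "(\<lambda>z::complex. inverse (z ^ (2*Suc m+1))) \<in> o[F](\<lambda>z. inverse (z ^ (2*m+1)))"
      by (rule inv_pow_smallo[OF _ F]) simp
    moreover have "(\<lambda>z::complex. inverse (z ^ (2*m+1))) \<in> \<Theta>[F](\<lambda>z. w (Suc m) z - w m z)"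
      using w_step_theta[OF F, of m] by (simp add: bigtheta_sym)
    ultimately have "(\<lambda>z. w (Suc (Suc m)) z - w (Suc m) z) \<in> o[F](\<lambda>z. w (Suc m) z - w m z)"
      using landau_o.small.bigtheta_trans1 landau_o.small.bigtheta_trans2 by blast
    thus ?thesis by (simp add: numeral_2_eq_2)
  qed
  have 2: "(\<lambda>z. f z - w m z) \<in> O[F](\<lambda>z. w (Suc m) z - w m z) \<longleftrightarrow>
           (\<lambda>z. f z - w m z) \<in> O[F](\<lambda>z. inverse (z ^ (2*m+1)))" for m
    using w_step_theta[OF F, of m] landau_o.big.cong_bigtheta by blast
  show ?thesis unfolding asymp_cf_def using 1 2 by blast
qed

lemma P6_iff:
  assumes F: "F \<le> at_infinity"
  shows "infinite {n. (\<lambda>z. f z - w n z) \<in> O[F](\<lambda>z. inverse (z ^ (2*n+1)))} \<longleftrightarrow>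
         (\<forall>n. (\<lambda>z. f z - w n z) \<in> O[F](\<lambda>z. inverse (z ^ (2*n+1))))"
proof
  assume inf: "infinite {n. (\<lambda>z. f z - w n z) \<in> O[F](\<lambda>z. inverse (z ^ (2*n+1)))}"
  show "\<forall>n. (\<lambda>z. f z - w n z) \<in> O[F](\<lambda>z. inverse (z ^ (2*n+1)))"
  proof
    fix n
    obtain N where N: "N \<ge> n" "(\<lambda>z. f z - w N z) \<in> O[F](\<lambda>z. inverse (z ^ (2*N+1)))"
      using inf unfolding infinite_nat_iff_unbounded_le by blast
    have "(\<lambda>z::complex. inverse (z ^ (2*N+1))) \<in> O[F](\<lambda>z. inverse (z ^ (2*n+1)))"
      using N(1) by (intro inv_pow_bigo F) simp
    with N(2) have "(\<lambda>z. f z - w N z) \<in> O[F](\<lambda>z. inverse (z ^ (2*n+1)))"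
      by (rule landau_o.big_trans)
    from sum_in_bigo(1)[OF this w_diff_bigo[OF F N(1)]] show "(\<lambda>z. f z - w n z) \<in> O[F](\<lambda>z. inverse (z ^ (2*n+1)))"
      by simp
  qed
qed simp

lemma prod_conv: "complex_of_real (\<Prod>k=1..n+1. a k) = (\<Prod>i<Suc n. ac (Suc i))"
proof -
  have "(\<Prod>k=1..n+1. a k) = (\<Prod>i<Suc n. a (Suc i))"
    by (simp only: Suc_eq_plus1[symmetric] One_nat_def prod.atLeast1_atMost_eq, simp)
  thus ?thesis by (simp only: of_real_prod)
qed

lemma P4_iff:
  assumes F: "F \<le> at_infinity"
  shows "(\<forall>n. (\<lambda>z. f z - w n z) \<sim>[F] (\<lambda>z. complex_of_real (\<Prod>k=1..n+1. a k) / z ^ (2*n+1))) \<longleftrightarrow>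
         (\<forall>n. (\<lambda>z. f z - w n z) \<in> O[F](\<lambda>z. inverse (z ^ (2*n+1))))"
proof
  assume H: "\<forall>n. (\<lambda>z. f z - w n z) \<sim>[F] (\<lambda>z. complex_of_real (\<Prod>k=1..n+1. a k) / z ^ (2*n+1))"
  show "\<forall>n. (\<lambda>z. f z - w n z) \<in> O[F](\<lambda>z. inverse (z ^ (2*n+1)))"
  proof
    fix n
    have "(\<lambda>z. f z - w n z) \<in> \<Theta>[F](\<lambda>z. complex_of_real (\<Prod>k=1..n+1. a k) / z ^ (2*n+1))"
      using H asymp_equiv_imp_bigtheta by blast
    moreover have "(\<lambda>z. complex_of_real (\<Prod>k=1..n+1. a k) / z ^ (2*n+1)) \<in> \<Theta>[F](\<lambda>z. inverse (z ^ (2*n+1)))"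
      unfolding prod_conv by (rule theta_c_inv[OF Pn_nz])
    ultimately show "(\<lambda>z. f z - w n z) \<in> O[F](\<lambda>z. inverse (z ^ (2*n+1)))"
      using landau_theta.trans by blast
  qed
next
  assume H: "\<forall>n. (\<lambda>z. f z - w n z) \<in> O[F](\<lambda>z. inverse (z ^ (2*n+1)))"
  show "\<forall>n. (\<lambda>z. f z - w n z) \<sim>[F] (\<lambda>z. complex_of_real (\<Prod>k=1..n+1. a k) / z ^ (2*n+1))"
  proof
    fix n
    have "(\<lambda>z. f z - w (Suc n) z) \<in> O[F](\<lambda>z. inverse (z ^ (2*Suc n+1)))" using H by blast
    moreover have "(\<lambda>z::complex. inverse (z ^ (2*Suc n+1))) \<in> o[F](\<lambda>z. inverse (z ^ (2*n+1)))"
      by (rule inv_pow_smallo[OF _ F]) simp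
    moreover have "(\<lambda>z. inverse (z ^ (2*n+1))) \<in> \<Theta>[F](\<lambda>z. complex_of_real (\<Prod>k=1..n+1. a k) / z ^ (2*n+1))"
      unfolding prod_conv by (subst bigtheta_sym) (rule theta_c_inv[OF Pn_nz])
    ultimately have sm: "(\<lambda>z. f z - w (Suc n) z) \<in> o[F](\<lambda>z. complex_of_real (\<Prod>k=1..n+1. a k) / z ^ (2*n+1))"
      using landau_o.big_small_trans landau_o.small.bigtheta_trans1 by blast
    have "(\<lambda>z. (f z - w (Suc n) z) + (w (Suc n) z - w n z)) \<sim>[F] (\<lambda>z. complex_of_real (\<Prod>k=1..n+1. a k) / z ^ (2*n+1))"
      by (subst asymp_equiv_add_left[OF sm]) (unfold prod_conv, rule w_step[OF F])
    thus "(\<lambda>z. f z - w n z) \<sim>[F] (\<lambda>z. complex_of_real (\<Prod>k=1..n+1. a k) / z ^ (2*n+1))"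
      by simp
  qed
qed


lemma P3_step:
  assumes F: "F \<le> at_infinity"
    and h: "(\<lambda>z. h z - J k (Suc m) z 0) \<in> O[F](\<lambda>z. inverse (z ^ (2*m+3)))"
  shows "(\<lambda>z. (z + bc (Suc k) - ac (Suc k) / h z) - J (Suc k) m z 0) \<in> O[F](\<lambda>z. inverse (z ^ (2*m+1)))"
proof -
  define D where "D = (\<lambda>z. z + bc (Suc k) - J (Suc k) m z 0)"
  have D: "D \<sim>[F] (\<lambda>z. z)" unfolding D_def using J_asym[OF F tendsto_const, of k m] by blast
  have acnz: "ac (Suc k) \<noteq> 0" using anz[of "Suc k"] by simp
  have JD: "J k (Suc m) z 0 = ac (Suc k) / D z" for z by (simp add: D_def)
  have aD: "(\<lambda>z. ac (Suc k) / D z) \<sim>[F] (\<lambda>z. ac (Suc k) / z)"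
    by (intro asymp_equiv_intros D)
  have th1: "(\<lambda>z. ac (Suc k) / z) \<in> \<Theta>[F](\<lambda>z. inverse (z ^ 1))"
    using theta_c_inv[OF acnz, of 1 F] by (simp only: power_one_right)
  have "(\<lambda>z. h z - ac (Suc k) / D z) \<in> o[F](\<lambda>z. ac (Suc k) / D z)"
  proof -
    have "(\<lambda>z::complex. inverse (z ^ (2*m+3))) \<in> o[F](\<lambda>z. inverse (z ^ 1))"
      by (rule inv_pow_smallo[OF _ F]) simp
    moreover have "(\<lambda>z. inverse (z ^ 1)) \<in> \<Theta>[F](\<lambda>z. ac (Suc k) / D z)"
      using landau_theta.trans[OF asymp_equiv_imp_bigtheta[OF aD] th1] by (simp add: bigtheta_sym)
    ultimately show ?thesis using h unfolding JD
      using landau_o.big_small_trans landau_o.small.bigtheta_trans1 by blast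
  qed
  hence "h \<sim>[F] (\<lambda>z. ac (Suc k) / D z)" by (rule smallo_imp_asymp_equiv)
  hence hz: "h \<sim>[F] (\<lambda>z. ac (Suc k) / z)" using aD by (rule asymp_equiv_trans)
  have evh: "eventually (\<lambda>z. h z \<noteq> 0) F"
    using asymp_equiv_eventually_zeros[OF hz] ev_nz[OF F] by eventually_elim (use acnz in auto)
  have evD: "eventually (\<lambda>z. D z \<noteq> 0) F"
    using asymp_equiv_eventually_zeros[OF D] ev_nz[OF F] by eventually_elim auto
  have "(\<lambda>z. D z / h z) \<sim>[F] (\<lambda>z. z / (ac (Suc k) / z))"
    by (intro asymp_equiv_intros D hz)
  hence "(\<lambda>z. D z / h z) \<in> O[F](\<lambda>z. z / (ac (Suc k) / z))" by (rule asymp_equiv_imp_bigo)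
  moreover have "(\<lambda>z. z / (ac (Suc k) / z)) \<in> O[F](\<lambda>z. z ^ 2)"
  proof -
    have "(\<lambda>z. z / (ac (Suc k) / z)) = (\<lambda>z. inverse (ac (Suc k)) * z ^ 2)"
      by (auto simp: field_simps power2_eq_square)
    thus ?thesis using acnz by simp
  qed
  ultimately have 1: "(\<lambda>z. D z / h z) \<in> O[F](\<lambda>z. z ^ 2)" by (rule landau_o.big_trans)
  have 2: "(\<lambda>z. h z - ac (Suc k) / D z) \<in> O[F](\<lambda>z. inverse (z ^ (2*m+3)))"
    using h unfolding JD .
  from landau_o.big.mult[OF 1 2]
  have 3: "(\<lambda>z. D z / h z * (h z - ac (Suc k) / D z)) \<in> O[F](\<lambda>z. z ^ 2 * inverse (z ^ (2*m+3)))" .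
  have e1: "eventually (\<lambda>z. D z / h z * (h z - ac (Suc k) / D z) =
          (z + bc (Suc k) - ac (Suc k) / h z) - J (Suc k) m z 0) F"
    using evh evD
  proof eventually_elim
    case (elim z)
    have "(z + bc (Suc k) - ac (Suc k) / h z) - J (Suc k) m z 0 = D z - ac (Suc k) / h z"
      by (simp add: D_def)
    thus ?case using elim by (simp add: field_simps)
  qed
  have e2: "eventually (\<lambda>z. z ^ 2 * inverse (z ^ (2*m+3)) = inverse (z ^ (2*m+1))) F"
    using ev_nz[OF F]
  proof eventually_elim
    case (elim z)
    have e: "2*m+3 = 2 + (2*m+1)" by simp
    have "z ^ (2*m+3) = z^2 * z^(2*m+1)" by (simp only: e power_add)
    thus ?case using elim by (simp add: field_simps)
  qed
  show ?thesis
    using 3 landau_o.big.in_cong[OF e1] landau_o.big.cong[OF e2] by simp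
qed


lemma P5_imp_P3:
  assumes F: "F \<le> at_infinity"
    and H: "\<forall>n. (\<lambda>z. f z - w n z) \<in> O[F](\<lambda>z. inverse (z ^ (2*n+1)))"
  shows "\<exists>fn. (\<forall>z. f z = J 0 n z (fn z)) \<and> fn \<sim>[F] (\<lambda>z. ac (n+1) / z)"
proof -
  define g where "g = (\<lambda>j z. jinv ac bc 0 j z (f z))"
  have acnz: "\<And>i. ac (Suc i) \<noteq> 0" using anz by simp
  have claim: "j \<le> n \<Longrightarrow> (\<lambda>z. g j z - J j (Suc (n-j)) z 0) \<in> O[F](\<lambda>z. inverse (z ^ (2*(n-j)+3)))" for j
  proof (induction j)
    case 0
    have e1: "(\<lambda>z. g 0 z - J 0 (Suc (n-0)) z 0) = (\<lambda>z. f z - w (Suc n) z)" by (simp add: g_def w_J)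
    have e2: "2*(n-0)+3 = 2*Suc n+1" by simp
    show ?case unfolding e1 e2 using H by blast
  next
    case (Suc j)
    define m where "m = n - Suc j"
    have nj: "n - j = Suc m" using Suc.prems unfolding m_def by simp
    have IH: "(\<lambda>z. g j z - J j (Suc (Suc m)) z 0) \<in> O[F](\<lambda>z. inverse (z ^ (2*(Suc m)+3)))"
      using Suc.IH Suc.prems unfolding nj[symmetric] by simp
    have A: "(\<lambda>z. (z + bc (Suc j) - ac (Suc j) / g j z) - J (Suc j) (Suc m) z 0) \<in> O[F](\<lambda>z. inverse (z ^ (2*(Suc m)+1)))"
      by (rule P3_step[OF F IH])
    have B: "g (Suc j) = (\<lambda>z. z + bc (Suc j) - ac (Suc j) / g j z)"
      by (rule ext) (simp only: g_def jinv_Suc add_0)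
    have C: "2*m+3 = 2*(Suc m)+1" by simp
    show ?case unfolding B m_def[symmetric] C by (rule A)
  qed
  from claim[of n] have E: "(\<lambda>z. g n z - J n (Suc 0) z 0) \<in> O[F](\<lambda>z. inverse (z ^ 3))" by simp
  have A: "(\<lambda>z. J n (Suc 0) z 0) \<sim>[F] (\<lambda>z. ac (Suc n) / z)"
    using J_asym[OF F tendsto_const, of n 0] by blast
  have th1: "(\<lambda>z. ac (Suc n) / z) \<in> \<Theta>[F](\<lambda>z. inverse (z ^ 1))"
    using theta_c_inv[OF acnz[of n], of 1 F] by (simp only: power_one_right)
  have "(\<lambda>z::complex. inverse (z ^ 3)) \<in> o[F](\<lambda>z. inverse (z ^ 1))"
    by (rule inv_pow_smallo[OF _ F]) simp
  moreover have "(\<lambda>z. inverse (z ^ 1)) \<in> \<Theta>[F](\<lambda>z. J n (Suc 0) z 0)"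
    using landau_theta.trans[OF asymp_equiv_imp_bigtheta[OF A] th1] by (simp add: bigtheta_sym)
  ultimately have "(\<lambda>z. g n z - J n (Suc 0) z 0) \<in> o[F](\<lambda>z. J n (Suc 0) z 0)"
    using E landau_o.big_small_trans landau_o.small.bigtheta_trans1 by blast
  hence "g n \<sim>[F] (\<lambda>z. J n (Suc 0) z 0)" by (rule smallo_imp_asymp_equiv)
  hence "g n \<sim>[F] (\<lambda>z. ac (Suc n) / z)" using A by (rule asymp_equiv_trans)
  moreover have "\<forall>z. f z = J 0 n z (g n z)"
    unfolding g_def using jinv_correct[of ac bc, OF acnz] by simp
  ultimately show ?thesis by auto
qed

lemma P3_imp_bigo:
  assumes F: "F \<le> at_infinity" and n: "n \<ge> 1"
    and ev: "eventually (\<lambda>z. f z = J 0 n z (fn z)) F"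
    and fn: "fn \<sim>[F] (\<lambda>z. ac (n+1) / z)"
  shows "(\<lambda>z. f z - w n z) \<in> O[F](\<lambda>z. inverse (z ^ (2*n+1)))"
proof -
  have t: "(fn \<longlongrightarrow> 0) F"
    using fn div_z_tendsto[OF F] asymp_equiv_tendsto_transfer asymp_equiv_sym by blast
  have B: "(\<lambda>z. J 0 n z (fn z) - J 0 n z 0) \<sim>[F] (\<lambda>z. (fn z - 0) * (\<Prod>i<n. ac (Suc (0+i))) / z ^ (2*n))"
    by (rule J_diff[OF F t tendsto_const])
  have C: "(\<lambda>z. (fn z - 0) * (\<Prod>i<n. ac (Suc (0+i))) / z ^ (2*n)) \<sim>[F]
       (\<lambda>z. (ac (n+1) / z) * (\<Prod>i<n. ac (Suc (0+i))) / z ^ (2*n))"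
    by (intro asymp_equiv_intros) (use fn in simp)
  have D: "eventually (\<lambda>z. (ac (n+1) / z) * (\<Prod>i<n. ac (Suc (0+i))) / z ^ (2*n) =
      (\<Prod>i<Suc n. ac (Suc i)) / z ^ (2*n+1)) F"
    using ev_nz[OF F] by eventually_elim (simp add: field_simps)
  have E: "eventually (\<lambda>z. J 0 n z (fn z) - J 0 n z 0 = f z - w n z) F"
    using ev by eventually_elim (simp add: w_J)
  have "(\<lambda>z. f z - w n z) \<sim>[F] (\<lambda>z. (\<Prod>i<Suc n. ac (Suc i)) / z ^ (2*n+1))"
    using asymp_equiv_transfer[OF asymp_equiv_trans[OF B C] E D] .
  from landau_theta.trans[OF asymp_equiv_imp_bigtheta[OF this] theta_c_inv[OF Pn_nz]]
  show ?thesis by blast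
qed

lemma P3_iff:
  fixes X :: "complex set"
  shows "(\<forall>n\<ge>1. \<exists>fn :: complex \<Rightarrow> complex.
                   (\<forall>z\<in>X. f z = J 0 n z (fn z))
                   \<and> fn \<sim>[at_inf_within X] (\<lambda>z. ac (n+1) / z)) \<longleftrightarrow>
         (\<forall>n. (\<lambda>z. f z - w n z) \<in> O[at_inf_within X](\<lambda>z. inverse (z ^ (2*n+1))))"
    (is "?L \<longleftrightarrow> ?R")
proof
  assume ?R
  thus ?L using P5_imp_P3[OF at_inf_within_le] by blast
next
  assume L: ?L
  have "{n. n \<ge> 1} \<subseteq> {n. (\<lambda>z. f z - w n z) \<in> O[at_inf_within X](\<lambda>z. inverse (z ^ (2*n+1)))}"
  proof safe
    fix n :: nat assume n: "n \<ge> 1"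
    then obtain fn where fn: "\<forall>z\<in>X. f z = J 0 n z (fn z)" "fn \<sim>[at_inf_within X] (\<lambda>z. ac (n+1) / z)"
      using L by blast
    have ev: "eventually (\<lambda>z. f z = J 0 n z (fn z)) (at_inf_within X)"
      unfolding at_inf_within_def eventually_inf_principal using fn(1) by simp
    show "(\<lambda>z. f z - w n z) \<in> O[at_inf_within X](\<lambda>z. inverse (z ^ (2*n+1)))"
      by (rule P3_imp_bigo[OF at_inf_within_le n ev fn(2)])
  qed
  moreover have "infinite {n::nat. n \<ge> 1}"
    unfolding infinite_nat_iff_unbounded_le
  proof
    fix m :: nat
    show "\<exists>n\<ge>m. n \<in> {n::nat. n \<ge> 1}" by (rule exI[of _ "Suc m"]) simp
  qed
  ultimately show ?R using P6_iff[OF at_inf_within_le] infinite_super by blast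
qed


lemma w_S_bigo:
  fixes c :: "nat \<Rightarrow> complex"
  assumes approx: "\<And>n. n \<ge> 1 \<Longrightarrow>
       (\<lambda>z. w n z - (\<Sum>k\<le>2*n-1. c k / z ^ (k+1))) \<in> o[at_infinity](\<lambda>z. inverse (z ^ (2*n)))"
  shows "(\<lambda>z. w n z - (\<Sum>k\<le>2*n. c k / z ^ (k+1))) \<in> O[at_infinity](\<lambda>z. inverse (z ^ (2*n+1)))"
proof -
  let ?S = "\<lambda>N z. (\<Sum>k\<le>N. c k / z ^ (k+1))"
  have 1: "(\<lambda>z. w n z - w (Suc n) z) \<in> O[at_infinity](\<lambda>z. inverse (z ^ (2*n+1)))"
    using w_diff_bigo[OF order_refl, of n "Suc n"] landau_o.big.uminus_in_iff[of "\<lambda>z. w (Suc n) z - w n z"]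
    by simp
  have "(\<lambda>z. w (Suc n) z - ?S (2*Suc n - 1) z) \<in> o[at_infinity](\<lambda>z. inverse (z ^ (2*Suc n)))"
    by (rule approx) simp
  moreover have "(\<lambda>z::complex. inverse (z ^ (2*Suc n))) \<in> O[at_infinity](\<lambda>z. inverse (z ^ (2*n+1)))"
    by (intro inv_pow_bigo) simp_all
  ultimately have 2: "(\<lambda>z. w (Suc n) z - ?S (2*n+1) z) \<in> O[at_infinity](\<lambda>z. inverse (z ^ (2*n+1)))"
    using landau_o.small_big_trans' by simp
  have 3: "(\<lambda>z. ?S (2*n+1) z - ?S (2*n) z) \<in> O[at_infinity](\<lambda>z. inverse (z ^ (2*n+1)))"
  proof -
    have "(\<lambda>z. ?S (2*n+1) z - ?S (2*n) z) \<in> O[at_infinity](\<lambda>z. inverse (z ^ (2*n+2)))"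
      by (rule S_diff) simp_all
    moreover have "(\<lambda>z::complex. inverse (z ^ (2*n+2))) \<in> O[at_infinity](\<lambda>z. inverse (z ^ (2*n+1)))"
      by (intro inv_pow_bigo) simp_all
    ultimately show ?thesis by (rule landau_o.big_trans)
  qed
  from sum_in_bigo(1)[OF sum_in_bigo(1)[OF 1 2] 3] show ?thesis by (simp add: algebra_simps)
qed

lemma P1_iff:
  fixes c :: "nat \<Rightarrow> complex"
  assumes F: "F \<le> at_infinity"
  assumes approx: "\<And>n. n \<ge> 1 \<Longrightarrow>
       (\<lambda>z. w n z - (\<Sum>k\<le>2*n-1. c k / z ^ (k+1))) \<in> o[at_infinity](\<lambda>z. inverse (z ^ (2*n)))"
  shows "asymp_series F f c \<longleftrightarrow> (\<forall>n. (\<lambda>z. f z - w n z) \<in> O[F](\<lambda>z. inverse (z ^ (2*n+1))))"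
proof
  assume H: "asymp_series F f c"
  show "\<forall>n. (\<lambda>z. f z - w n z) \<in> O[F](\<lambda>z. inverse (z ^ (2*n+1)))"
  proof
    fix n
    have 1: "(\<lambda>z. f z - (\<Sum>k\<le>2*n. c k / z ^ (k+1))) \<in> O[F](\<lambda>z. inverse (z ^ (2*n+1)))"
      using H unfolding asymp_series_def by (intro landau_o.small_imp_big) blast
    have 2: "(\<lambda>z. w n z - (\<Sum>k\<le>2*n. c k / z ^ (k+1))) \<in> O[F](\<lambda>z. inverse (z ^ (2*n+1)))"
      by (rule landau_o.big.filter_mono[OF F w_S_bigo[OF approx]])
    from sum_in_bigo(2)[OF 1 2] show "(\<lambda>z. f z - w n z) \<in> O[F](\<lambda>z. inverse (z ^ (2*n+1)))"
      by simp
  qed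
next
  assume H: "\<forall>n. (\<lambda>z. f z - w n z) \<in> O[F](\<lambda>z. inverse (z ^ (2*n+1)))"
  let ?S = "\<lambda>N z. (\<Sum>k\<le>N. c k / z ^ (k+1))"
  show "asymp_series F f c" unfolding asymp_series_def
  proof
    fix n
    have 1: "(\<lambda>z. f z - w (Suc n) z) \<in> o[F](\<lambda>z. inverse (z ^ (n+1)))"
    proof -
      have "(\<lambda>z. f z - w (Suc n) z) \<in> O[F](\<lambda>z. inverse (z ^ (2*Suc n+1)))" using H by blast
      moreover have "(\<lambda>z::complex. inverse (z ^ (2*Suc n+1))) \<in> o[F](\<lambda>z. inverse (z ^ (n+1)))"
        by (intro inv_pow_smallo F) simp
      ultimately show ?thesis by (rule landau_o.big_small_trans)
    qed
    have 2: "(\<lambda>z. w (Suc n) z - ?S (2*n+1) z) \<in> o[F](\<lambda>z. inverse (z ^ (n+1)))"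
    proof -
      have "(\<lambda>z. w (Suc n) z - ?S (2*Suc n - 1) z) \<in> o[at_infinity](\<lambda>z. inverse (z ^ (2*Suc n)))"
        by (rule approx) simp
      hence "(\<lambda>z. w (Suc n) z - ?S (2*n+1) z) \<in> o[F](\<lambda>z. inverse (z ^ (2*Suc n)))"
        using landau_o.small.filter_mono[OF F] by simp
      moreover have "(\<lambda>z::complex. inverse (z ^ (2*Suc n))) \<in> O[F](\<lambda>z. inverse (z ^ (n+1)))"
        by (intro inv_pow_bigo F) simp
      ultimately show ?thesis by (rule landau_o.small_big_trans)
    qed
    have 3: "(\<lambda>z. ?S (2*n+1) z - ?S n z) \<in> o[F](\<lambda>z. inverse (z ^ (n+1)))"
    proof -
      have "(\<lambda>z. ?S (2*n+1) z - ?S n z) \<in> O[F](\<lambda>z. inverse (z ^ (n+2)))"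
        by (rule S_diff[OF F]) simp
      moreover have "(\<lambda>z::complex. inverse (z ^ (n+2))) \<in> o[F](\<lambda>z. inverse (z ^ (n+1)))"
        by (intro inv_pow_smallo F) simp
      ultimately show ?thesis by (rule landau_o.big_small_trans)
    qed
    from sum_in_smallo(1)[OF sum_in_smallo(1)[OF 1 2] 3]
    show "(\<lambda>z. f z - ?S n z) \<in> o[F](\<lambda>z. inverse (z ^ (n+1)))" by (simp add: algebra_simps)
  qed
qed


lemma wrat_rep: "\<exists>P Q. wrat a b n = to_fract P / to_fract Q \<and> Q \<noteq> 0 \<and> degree Q = n \<and> (P = 0 \<or> degree P < n)
   \<and> eventually (\<lambda>z. w n z = poly P z / poly Q z) at_infinity"
proof -
  obtain P Q where PQ: "jfrac (\<lambda>k. to_fract [:complex_of_real (a k):]) (\<lambda>k. to_fract [:complex_of_real (b k):]) 0 n (to_fract [:0,1:]) 0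
              = to_fract P / to_fract Q"
    "degree Q = n" "lead_coeff Q = 1" "P = 0 \<or> degree P < n"
    "eventually (\<lambda>z. jfrac (\<lambda>k. complex_of_real (a k)) (\<lambda>k. complex_of_real (b k)) 0 n z 0 = poly P z / poly Q z) at_infinity"
    using jrep[of a b 0 n] by blast
  have "Q \<noteq> 0" using PQ(3) by auto
  thus ?thesis using PQ unfolding wrat_def wapp_def by blast
qed

lemma uniq_core:
  assumes F: "F \<le> at_infinity" "F \<noteq> bot"
    and fw: "(\<lambda>z. f z - w n z) \<in> O[F](\<lambda>z. inverse (z ^ (2*n+1)))"
    and gh: "h \<noteq> 0" "degree g \<le> n" "degree h \<le> n"
    and fg: "(\<lambda>z. f z - poly g z / poly h z) \<in> O[F](\<lambda>z. inverse (z ^ (2*n+1)))"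
  shows "to_fract g / to_fract h = wrat a b n"
proof -
  obtain P Q where PQ: "wrat a b n = to_fract P / to_fract Q" "Q \<noteq> 0" "degree Q = n" "P = 0 \<or> degree P < n"
     "eventually (\<lambda>z. w n z = poly P z / poly Q z) at_infinity"
    using wrat_rep[of n] by blast
  have ev: "eventually (\<lambda>z. f z - w n z = f z - poly P z / poly Q z) F"
    using filter_leD[OF F(1) PQ(5)] by eventually_elim simp
  have fP: "(\<lambda>z. f z - poly P z / poly Q z) \<in> O[F](\<lambda>z. inverse (z ^ (2*n+1)))"
    using landau_o.big.in_cong[OF ev] fw by (rule iffD1)
  from sum_in_bigo(2)[OF fP fg]
  have "(\<lambda>z. poly g z / poly h z - poly P z / poly Q z) \<in> O[F](\<lambda>z. inverse (z ^ (2*n+1)))"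
    by simp
  moreover have "degree P \<le> n" using PQ(4) by auto
  ultimately have "g * Q = P * h"
    using poly_uniq[OF F gh(1) PQ(2) gh(2,3) _ PQ(3)[THEN eq_imp_le]] by blast
  thus ?thesis unfolding PQ(1) using fract_eq_iff[OF gh(1) PQ(2)] by simp
qed

lemma P7_iff:
  assumes F: "F \<le> at_infinity" "F \<noteq> bot"
  shows "(\<forall>n. rdeg (wrat a b n) \<le> n
                   \<and> (\<lambda>z. f z - reval (wrat a b n) z) \<in> O[F](\<lambda>z. inverse (z ^ (2*n+1)))
                   \<and> (\<forall>r. rdeg r \<le> n \<and> (\<lambda>z. f z - reval r z) \<in> O[F](\<lambda>z. inverse (z ^ (2*n+1)))
                          \<longrightarrow> r = wrat a b n))
      \<longleftrightarrow> (\<forall>n. (\<lambda>z. f z - w n z) \<in> O[F](\<lambda>z. inverse (z ^ (2*n+1))))"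
proof -
  have key: "rdeg (wrat a b n) \<le> n \<and> eventually (\<lambda>z. f z - reval (wrat a b n) z = f z - w n z) F" for n
  proof -
    obtain P Q where PQ: "wrat a b n = to_fract P / to_fract Q" "Q \<noteq> 0" "degree Q = n" "P = 0 \<or> degree P < n"
       "eventually (\<lambda>z. w n z = poly P z / poly Q z) at_infinity"
      using wrat_rep[of n] by blast
    have "rdeg (wrat a b n) \<le> max (degree P) (degree Q)" by (rule rdeg_le(1)[OF PQ(2,1)])
    moreover have "max (degree P) (degree Q) \<le> n" using PQ(3,4) by auto
    moreover have "eventually (\<lambda>z. f z - reval (wrat a b n) z = f z - w n z) at_infinity"
      using PQ(5) poly_ev_nz[OF PQ(2)]
    proof eventually_elim
      case (elim z)
      thus ?case using rdeg_le(2)[OF PQ(2,1) elim(2)] by simp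
    qed
    ultimately show ?thesis using filter_leD[OF F(1)] by auto
  qed
  show ?thesis
  proof
    assume H: "\<forall>n. rdeg (wrat a b n) \<le> n
                   \<and> (\<lambda>z. f z - reval (wrat a b n) z) \<in> O[F](\<lambda>z. inverse (z ^ (2*n+1)))
                   \<and> (\<forall>r. rdeg r \<le> n \<and> (\<lambda>z. f z - reval r z) \<in> O[F](\<lambda>z. inverse (z ^ (2*n+1)))
                          \<longrightarrow> r = wrat a b n)"
    show "\<forall>n. (\<lambda>z. f z - w n z) \<in> O[F](\<lambda>z. inverse (z ^ (2*n+1)))"
    proof
      fix n
      have "eventually (\<lambda>z. f z - reval (wrat a b n) z = f z - w n z) F" using key by blast
      from landau_o.big.in_cong[OF this] H
      show "(\<lambda>z. f z - w n z) \<in> O[F](\<lambda>z. inverse (z ^ (2*n+1)))" by blast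
    qed
  next
    assume H: "\<forall>n. (\<lambda>z. f z - w n z) \<in> O[F](\<lambda>z. inverse (z ^ (2*n+1)))"
    show "\<forall>n. rdeg (wrat a b n) \<le> n
                   \<and> (\<lambda>z. f z - reval (wrat a b n) z) \<in> O[F](\<lambda>z. inverse (z ^ (2*n+1)))
                   \<and> (\<forall>r. rdeg r \<le> n \<and> (\<lambda>z. f z - reval r z) \<in> O[F](\<lambda>z. inverse (z ^ (2*n+1)))
                          \<longrightarrow> r = wrat a b n)"
    proof (intro allI conjI impI)
      fix n
      show "rdeg (wrat a b n) \<le> n" using key by blast
      have "eventually (\<lambda>z. f z - reval (wrat a b n) z = f z - w n z) F" using key by blast
      from landau_o.big.in_cong[OF this] H
      show "(\<lambda>z. f z - reval (wrat a b n) z) \<in> O[F](\<lambda>z. inverse (z ^ (2*n+1)))" by blast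
      fix r assume r: "rdeg r \<le> n \<and> (\<lambda>z. f z - reval r z) \<in> O[F](\<lambda>z. inverse (z ^ (2*n+1)))"
      obtain p q where pq: "q \<noteq> 0" "coprime p q" "r = to_fract p / to_fract q"
        using rep_exists[of r] by blast
      have "max (degree p) (degree q) \<le> n" using r rdeg_rep(1)[OF pq] by simp
      moreover have "(\<lambda>z. f z - poly p z / poly q z) \<in> O[F](\<lambda>z. inverse (z ^ (2*n+1)))"
        using r rdeg_rep(2)[OF pq] by simp
      ultimately have "to_fract p / to_fract q = wrat a b n"
        using uniq_core[OF F, of f n q p] H pq(1) by auto
      thus "r = wrat a b n" using pq(3) by simp
    qed
  qed
qed

lemma P8_iff:
  assumes F: "F \<le> at_infinity" "F \<noteq> bot"
  shows "(\<forall>n\<ge>1.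
                   (\<exists>g h :: complex poly. h \<noteq> 0 \<and> degree g \<le> n - 1 \<and> degree h \<le> n
                      \<and> (\<lambda>z. f z - poly g z / poly h z) \<in> O[F](\<lambda>z. inverse (z ^ (2*n+1)))
                      \<and> to_fract g / to_fract h = wrat a b n)
                 \<and> (\<forall>g h :: complex poly. h \<noteq> 0 \<and> degree g \<le> n - 1 \<and> degree h \<le> n
                      \<and> (\<lambda>z. f z - poly g z / poly h z) \<in> O[F](\<lambda>z. inverse (z ^ (2*n+1)))
                      \<longrightarrow> to_fract g / to_fract h = wrat a b n))
      \<longleftrightarrow> (\<forall>n. (\<lambda>z. f z - w n z) \<in> O[F](\<lambda>z. inverse (z ^ (2*n+1))))"
proof
  assume H: "\<forall>n\<ge>1.
                   (\<exists>g h :: complex poly. h \<noteq> 0 \<and> degree g \<le> n - 1 \<and> degree h \<le> n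
                      \<and> (\<lambda>z. f z - poly g z / poly h z) \<in> O[F](\<lambda>z. inverse (z ^ (2*n+1)))
                      \<and> to_fract g / to_fract h = wrat a b n)
                 \<and> (\<forall>g h :: complex poly. h \<noteq> 0 \<and> degree g \<le> n - 1 \<and> degree h \<le> n
                      \<and> (\<lambda>z. f z - poly g z / poly h z) \<in> O[F](\<lambda>z. inverse (z ^ (2*n+1)))
                      \<longrightarrow> to_fract g / to_fract h = wrat a b n)"
  have "{n. n \<ge> 1} \<subseteq> {n. (\<lambda>z. f z - w n z) \<in> O[F](\<lambda>z. inverse (z ^ (2*n+1)))}"
  proof safe
    fix n :: nat assume n: "n \<ge> 1"
    then obtain g h where gh: "h \<noteq> 0" "(\<lambda>z. f z - poly g z / poly h z) \<in> O[F](\<lambda>z. inverse (z ^ (2*n+1)))"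
       "to_fract g / to_fract h = wrat a b n"
      using H by blast
    obtain P Q where PQ: "wrat a b n = to_fract P / to_fract Q" "Q \<noteq> 0"
       "eventually (\<lambda>z. w n z = poly P z / poly Q z) at_infinity"
      using wrat_rep[of n] by blast
    have E: "g * Q = P * h" using gh(3) PQ(1) fract_eq_iff[OF gh(1) PQ(2)] by simp
    have "eventually (\<lambda>z. f z - poly g z / poly h z = f z - w n z) at_infinity"
      using PQ(3) poly_ev_nz[OF PQ(2)] poly_ev_nz[OF gh(1)]
    proof eventually_elim
      case (elim z)
      have "poly g z * poly Q z = poly P z * poly h z" using arg_cong[OF E, of "\<lambda>r. poly r z"] by simp
      hence "poly g z / poly h z = poly P z / poly Q z" using elim(2,3) by (simp add: frac_eq_eq)
      thus ?case using elim(1) by simp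
    qed
    from landau_o.big.in_cong[OF filter_leD[OF F(1) this]] gh(2)
    show "(\<lambda>z. f z - w n z) \<in> O[F](\<lambda>z. inverse (z ^ (2*n+1)))" by blast
  qed
  moreover have "infinite {n::nat. n \<ge> 1}"
    unfolding infinite_nat_iff_unbounded_le
  proof
    fix m :: nat
    show "\<exists>n\<ge>m. n \<in> {n::nat. n \<ge> 1}" by (rule exI[of _ "Suc m"]) simp
  qed
  ultimately show "\<forall>n. (\<lambda>z. f z - w n z) \<in> O[F](\<lambda>z. inverse (z ^ (2*n+1)))"
    using P6_iff[OF F(1)] infinite_super by blast
next
  assume H: "\<forall>n. (\<lambda>z. f z - w n z) \<in> O[F](\<lambda>z. inverse (z ^ (2*n+1)))"
  show "\<forall>n\<ge>1.
                   (\<exists>g h :: complex poly. h \<noteq> 0 \<and> degree g \<le> n - 1 \<and> degree h \<le> n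
                      \<and> (\<lambda>z. f z - poly g z / poly h z) \<in> O[F](\<lambda>z. inverse (z ^ (2*n+1)))
                      \<and> to_fract g / to_fract h = wrat a b n)
                 \<and> (\<forall>g h :: complex poly. h \<noteq> 0 \<and> degree g \<le> n - 1 \<and> degree h \<le> n
                      \<and> (\<lambda>z. f z - poly g z / poly h z) \<in> O[F](\<lambda>z. inverse (z ^ (2*n+1)))
                      \<longrightarrow> to_fract g / to_fract h = wrat a b n)"
  proof (intro allI impI conjI)
    fix n :: nat assume n: "n \<ge> 1"
    obtain P Q where PQ: "wrat a b n = to_fract P / to_fract Q" "Q \<noteq> 0" "degree Q = n" "P = 0 \<or> degree P < n"
       "eventually (\<lambda>z. w n z = poly P z / poly Q z) at_infinity"
      using wrat_rep[of n] by blast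
    have "eventually (\<lambda>z. f z - w n z = f z - poly P z / poly Q z) F"
      using filter_leD[OF F(1) PQ(5)] by eventually_elim simp
    from landau_o.big.in_cong[OF this] H
    have fP: "(\<lambda>z. f z - poly P z / poly Q z) \<in> O[F](\<lambda>z. inverse (z ^ (2*n+1)))" by blast
    have "degree P \<le> n - 1" using PQ(4) n by auto
    thus "\<exists>g h :: complex poly. h \<noteq> 0 \<and> degree g \<le> n - 1 \<and> degree h \<le> n
                      \<and> (\<lambda>z. f z - poly g z / poly h z) \<in> O[F](\<lambda>z. inverse (z ^ (2*n+1)))
                      \<and> to_fract g / to_fract h = wrat a b n"
      using PQ(1,2,3) fP by auto
  next
    fix n :: nat and g h :: "complex poly"
    assume n: "n \<ge> 1"
      and gh: "h \<noteq> 0 \<and> degree g \<le> n - 1 \<and> degree h \<le> n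
                      \<and> (\<lambda>z. f z - poly g z / poly h z) \<in> O[F](\<lambda>z. inverse (z ^ (2*n+1)))"
    have "degree g \<le> n" using gh by auto
    thus "to_fract g / to_fract h = wrat a b n"
      using uniq_core[OF F, of f n h g] H gh by auto
  qed
qed

end


lemma nonbot: "\<not> bounded X \<Longrightarrow> at_inf_within X \<noteq> bot"
proof
  assume nb: "\<not> bounded X" and bot: "at_inf_within X = bot"
  have "eventually (\<lambda>_. False) (at_inf_within X)" using bot by simp
  hence "eventually (\<lambda>x. x \<in> X \<longrightarrow> False) at_infinity"
    unfolding at_inf_within_def eventually_inf_principal .
  then obtain B where "\<forall>x. B \<le> norm x \<longrightarrow> x \<notin> X" unfolding eventually_at_infinity by blast
  hence "\<forall>x\<in>X. norm x \<le> B" by (meson linear)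
  hence "bounded X" unfolding bounded_iff by blast
  with nb show False by simp
qed

lemma geom_rem:
  fixes z w :: complex
  assumes "z \<noteq> 0" "z \<noteq> w"
  shows "1 / (z - w) - (\<Sum>k\<le>n. w ^ k / z ^ (k+1)) = w ^ (n+1) / (z ^ (n+1) * (z - w))"
proof (induction n)
  case 0
  have "z - w \<noteq> 0" using assms by simp
  thus ?case using assms by (simp add: field_simps)
next
  case (Suc n)
  have zw: "z - w \<noteq> 0" using assms by simp
  have "1 / (z - w) - (\<Sum>k\<le>Suc n. w ^ k / z ^ (k+1))
      = w ^ (n+1) / (z ^ (n+1) * (z - w)) - w ^ (Suc n) / z ^ (Suc n + 1)"
    using Suc by simp
  also have "\<dots> = w ^ (Suc n + 1) / (z ^ (Suc n + 1) * (z - w))"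
    using assms zw by (simp add: field_simps)
  finally show ?case .
qed

lemma sector_bound:
  assumes "\<delta> > 0" "\<epsilon> > 0"
  shows "\<exists>\<kappa>>0. \<forall>z. \<delta> \<le> \<bar>Arg z\<bar> \<and> \<bar>Arg z\<bar> \<le> pi - \<epsilon> \<longrightarrow> z \<noteq> 0 \<and> \<kappa> * cmod z \<le> \<bar>Im z\<bar>"
proof -
  define \<kappa> where "\<kappa> = min (sin (min \<delta> (pi/2))) (sin (min \<epsilon> (pi/2)))"
  have "sin (min \<delta> (pi/2)) > 0" using assms pi_gt_zero by (intro sin_gt_zero) (auto simp: min_less_iff_disj)
  moreover have "sin (min \<epsilon> (pi/2)) > 0" using assms pi_gt_zero by (intro sin_gt_zero) (auto simp: min_less_iff_disj)
  ultimately have kpos: "\<kappa> > 0" by (simp add: \<kappa>_def)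
  have "z \<noteq> 0 \<and> \<kappa> * cmod z \<le> \<bar>Im z\<bar>" if z: "\<delta> \<le> \<bar>Arg z\<bar>" "\<bar>Arg z\<bar> \<le> pi - \<epsilon>" for z
  proof -
    have znz: "z \<noteq> 0" using z assms by (auto simp: Arg_zero)
    define \<theta> where "\<theta> = \<bar>Arg z\<bar>"
    have th: "0 \<le> \<theta>" "\<theta> \<le> pi" using Arg_bounded[of z] by (auto simp: \<theta>_def)
    have sth: "\<bar>sin (Arg z)\<bar> = sin \<theta>"
    proof (cases "Arg z \<ge> 0")
      case True thus ?thesis using sin_ge_zero[OF th] by (simp add: \<theta>_def)
    next
      case False thus ?thesis using sin_ge_zero[OF th] by (simp add: \<theta>_def)
    qed
    have Im: "\<bar>Im z\<bar> = cmod z * sin \<theta>"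
    proof -
      have "Im z = cmod z * sin (Arg z)" using sin_Arg[OF znz] znz by simp
      hence "\<bar>Im z\<bar> = cmod z * \<bar>sin (Arg z)\<bar>" by (simp add: abs_mult)
      thus ?thesis using sth by simp
    qed
    have "\<kappa> \<le> sin \<theta>"
    proof (cases "\<theta> \<le> pi/2")
      case True
      have "\<delta> \<le> \<theta>" using z by (simp add: \<theta>_def)
      hence "sin \<delta> \<le> sin \<theta>" using True assms by (subst sin_mono_le_eq) auto
      moreover have "min \<delta> (pi/2) = \<delta>" using True \<open>\<delta> \<le> \<theta>\<close> by simp
      ultimately show ?thesis by (simp add: \<kappa>_def)
    next
      case False
      have e: "\<epsilon> \<le> pi - \<theta>" using z by (simp add: \<theta>_def)
      have "sin \<epsilon> \<le> sin (pi - \<theta>)" using False assms e by (subst sin_mono_le_eq) auto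
      moreover have "min \<epsilon> (pi/2) = \<epsilon>" using False e by simp
      ultimately show ?thesis by (simp add: \<kappa>_def)
    qed
    hence "\<kappa> * cmod z \<le> sin \<theta> * cmod z" by (simp add: mult_right_mono)
    thus ?thesis using znz Im by (simp add: mult.commute)
  qed
  thus ?thesis using kpos by blast
qed

lemma stieltjes_series:
  fixes \<mu> :: "real measure"
  assumes sets_mu: "sets \<mu> = sets borel"
    and moments: "\<And>k. integrable \<mu> (\<lambda>t. t ^ k)"
    and pos: "\<delta> > 0" "\<epsilon> > 0"
  shows "asymp_series (at_inf_within {z. \<delta> \<le> \<bar>Arg z\<bar> \<and> \<bar>Arg z\<bar> \<le> pi - \<epsilon>}) (stieltjes \<mu>)
           (\<lambda>k. complex_of_real (moment \<mu> k))"
proof -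
  define S where "S = {z. \<delta> \<le> \<bar>Arg z\<bar> \<and> \<bar>Arg z\<bar> \<le> pi - \<epsilon>}"
  define F where "F = at_inf_within S"
  obtain \<kappa> where kpos: "\<kappa> > 0" and kS: "\<And>z. z \<in> S \<Longrightarrow> z \<noteq> 0 \<and> \<kappa> * cmod z \<le> \<bar>Im z\<bar>"
    using sector_bound[OF pos] unfolding S_def by blast
  have F: "F \<le> at_infinity" unfolding F_def by (rule at_inf_within_le)
  have evS: "eventually (\<lambda>z. z \<in> S) F"
    unfolding F_def at_inf_within_def eventually_inf_principal by simp
  have meas: "(\<lambda>t. 1 / (z - complex_of_real t)) \<in> borel_measurable \<mu>" for z
  proof -
    have "(\<lambda>t. 1 / (z - complex_of_real t)) \<in> borel_measurable borel" by measurable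
    thus ?thesis by (simp only: measurable_cong_sets[OF sets_mu refl, of borel])
  qed
  have bound: "norm (stieltjes \<mu> z - (\<Sum>k\<le>n. complex_of_real (moment \<mu> k) / z ^ (k+1)))
      \<le> ((LINT t|\<mu>. \<bar>t ^ (n+1)\<bar>) / \<kappa>) * norm (inverse (z ^ (n+2)))" if zS: "z \<in> S" for z n
  proof -
    have znz: "z \<noteq> 0" and kIm: "\<kappa> * cmod z \<le> \<bar>Im z\<bar>" using kS[OF zS] by auto
    have kz: "\<kappa> * cmod z > 0" using kpos znz by simp
    have dist: "\<kappa> * cmod z \<le> cmod (z - complex_of_real t)" for t
    proof -
      have "\<bar>Im (z - complex_of_real t)\<bar> \<le> cmod (z - complex_of_real t)" by (rule abs_Im_le_cmod)
      thus ?thesis using kIm by simp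
    qed
    have zt: "z \<noteq> complex_of_real t" for t
      using dist[of t] kz by auto
    have int1: "integrable \<mu> (\<lambda>t. 1 / (z - complex_of_real t))"
    proof (rule Bochner_Integration.integrable_bound[OF _ meas])
      show "integrable \<mu> (\<lambda>t. (1 / (\<kappa> * cmod z)) * t ^ 0)"
        by (rule integrable_mult_right) (rule moments)
      show "AE t in \<mu>. norm (1 / (z - complex_of_real t)) \<le> norm ((1 / (\<kappa> * cmod z)) * t ^ 0)"
      proof (rule AE_I2)
        fix t
        have "1 / cmod (z - complex_of_real t) \<le> 1 / (\<kappa> * cmod z)"
          using dist[of t] kz kpos by (intro divide_left_mono mult_pos_pos) auto
        thus "norm (1 / (z - complex_of_real t)) \<le> norm ((1 / (\<kappa> * cmod z)) * t ^ 0)"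
          using kz by (simp add: norm_divide)
      qed
    qed
    have intk: "integrable \<mu> (\<lambda>t. complex_of_real (t ^ k) / z ^ (k+1))" for k
      by (intro integrable_divide integrable_of_real moments)
    have eqc: "complex_of_real (moment \<mu> k) / z ^ (k+1) = (LINT t|\<mu>. complex_of_real (t ^ k) / z ^ (k+1))" for k
      by (simp only: moment_def integral_divide_zero integral_complex_of_real)
    define r where "r = (\<lambda>t. complex_of_real (t ^ (n+1)) / (z ^ (n+1) * (z - complex_of_real t)))"
    have req: "r t = 1 / (z - complex_of_real t) - (\<Sum>k\<le>n. complex_of_real (t ^ k) / z ^ (k+1))" for t
      using geom_rem[OF znz zt[of t], of n] by (simp add: r_def of_real_power)
    have intsum: "integrable \<mu> (\<lambda>t. \<Sum>k\<le>n. complex_of_real (t ^ k) / z ^ (k+1))"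
      by (rule Bochner_Integration.integrable_sum) (rule intk)
    have intr: "integrable \<mu> r"
      unfolding req[abs_def] by (rule Bochner_Integration.integrable_diff[OF int1 intsum])
    have "stieltjes \<mu> z - (\<Sum>k\<le>n. complex_of_real (moment \<mu> k) / z ^ (k+1))
        = (LINT t|\<mu>. 1 / (z - complex_of_real t)) - integral\<^sup>L \<mu> (\<lambda>t. \<Sum>k\<le>n. complex_of_real (t ^ k) / z ^ (k+1))"
      unfolding stieltjes_def eqc using intk by (simp add: Bochner_Integration.integral_sum)
    also have "\<dots> = (LINT t|\<mu>. r t)"
      unfolding req by (rule Bochner_Integration.integral_diff[OF int1 intsum, symmetric])
    finally have E: "stieltjes \<mu> z - (\<Sum>k\<le>n. complex_of_real (moment \<mu> k) / z ^ (k+1)) = (LINT t|\<mu>. r t)" .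
    have nr: "norm (r t) \<le> \<bar>t ^ (n+1)\<bar> / (\<kappa> * cmod z ^ (n+2))" for t
    proof -
      have "norm (r t) = \<bar>t ^ (n+1)\<bar> / (cmod z ^ (n+1) * cmod (z - complex_of_real t))"
        by (simp add: r_def norm_divide norm_mult norm_power abs_mult power_abs)
      also have "\<dots> \<le> \<bar>t ^ (n+1)\<bar> / (cmod z ^ (n+1) * (\<kappa> * cmod z))"
      proof (rule divide_left_mono)
        show "cmod z ^ (n+1) * (\<kappa> * cmod z) \<le> cmod z ^ (n+1) * cmod (z - complex_of_real t)"
          using dist[of t] by (intro mult_left_mono) auto
        have d: "cmod (z - complex_of_real t) > 0" using dist[of t] kz by linarith
        have "cmod z ^ (n+1) > 0" using znz by simp
        thus "0 < cmod z ^ (n+1) * cmod (z - complex_of_real t) * (cmod z ^ (n+1) * (\<kappa> * cmod z))"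
          using d kz by simp
      qed simp
      also have "\<dots> = \<bar>t ^ (n+1)\<bar> / (\<kappa> * cmod z ^ (n+2))"
        by (simp add: field_simps)
      finally show ?thesis .
    qed
    have "norm (LINT t|\<mu>. r t) \<le> (LINT t|\<mu>. norm (r t))" by (rule integral_norm_bound)
    also have "\<dots> \<le> (LINT t|\<mu>. \<bar>t ^ (n+1)\<bar> / (\<kappa> * cmod z ^ (n+2)))"
      by (rule integral_mono[OF integrable_norm[OF intr] integrable_divide[OF integrable_abs[OF moments]] nr])
    also have "\<dots> = (LINT t|\<mu>. \<bar>t ^ (n+1)\<bar>) / (\<kappa> * cmod z ^ (n+2))"
      by (rule integral_divide_zero)
    also have "\<dots> = ((LINT t|\<mu>. \<bar>t ^ (n+1)\<bar>) / \<kappa>) * norm (inverse (z ^ (n+2)))"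
    proof -
      have g: "X / (\<kappa> * c) = X / \<kappa> * inverse c" for X c :: real
        by (simp add: divide_inverse mult.commute mult.left_commute)
      have "norm (inverse (z ^ (n+2))) = inverse (cmod z ^ (n+2))" by (simp only: norm_inverse norm_power)
      thus ?thesis by (simp only: g)
    qed
    finally show ?thesis using E by simp
  qed
  show ?thesis
    unfolding asymp_series_def S_def[symmetric] F_def[symmetric]
  proof
    fix n
    have "(\<lambda>z. stieltjes \<mu> z - (\<Sum>k\<le>n. complex_of_real (moment \<mu> k) / z ^ (k+1))) \<in> O[F](\<lambda>z. inverse (z ^ (n+2)))"
    proof (rule landau_o.bigI)
      show "eventually (\<lambda>z. norm (stieltjes \<mu> z - (\<Sum>k\<le>n. complex_of_real (moment \<mu> k) / z ^ (k+1)))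
          \<le> ((LINT t|\<mu>. \<bar>t ^ (n+1)\<bar>) / \<kappa> + 1) * norm (inverse (z ^ (n+2)))) F"
        using evS
      proof eventually_elim
        case (elim z)
        from bound[OF elim, of n] show ?case
          by (rule order_trans) (intro mult_right_mono, simp_all)
      qed
      have "0 \<le> (LINT t|\<mu>. \<bar>t ^ (n+1)\<bar>)" by (rule Bochner_Integration.integral_nonneg) simp
      thus "0 < (LINT t|\<mu>. \<bar>t ^ (n+1)\<bar>) / \<kappa> + 1" using kpos by (simp add: add_nonneg_pos)
    qed
    moreover have "(\<lambda>z::complex. inverse (z ^ (n+2))) \<in> o[F](\<lambda>z. inverse (z ^ (n+1)))"
      by (intro inv_pow_smallo F) simp
    ultimately show "(\<lambda>z. stieltjes \<mu> z - (\<Sum>k\<le>n. complex_of_real (moment \<mu> k) / z ^ (k+1))) \<in> o[F](\<lambda>z. inverse (z ^ (n+1)))"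
      by (rule landau_o.big_small_trans)
  qed
qed


theorem theorem4p6:
  fixes \<mu> :: "real measure" and a b :: "nat \<Rightarrow> real"
  assumes sets_mu: "sets \<mu> = sets borel"
    and supp: "infinite (msupport \<mu>)"
    and moments: "\<And>k. integrable \<mu> (\<lambda>t. t ^ k)"
    and a_pos: "\<And>n. n \<ge> 1 \<Longrightarrow> a n > 0"
    and approx: "\<And>n. n \<ge> 1 \<Longrightarrow>
       (\<lambda>z. wapp a b n z - (\<Sum>k\<le>2*n-1. complex_of_real (moment \<mu> k) / z ^ (k+1)))
         \<in> o[at_infinity](\<lambda>z. inverse (z ^ (2*n)))"
  shows
   "(\<forall>(X :: complex set) (f :: complex \<Rightarrow> complex). \<not> bounded X \<longrightarrow>
      (let F = at_inf_within X;
           P1 = asymp_series F f (\<lambda>k. complex_of_real (moment \<mu> k));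
           P2 = asymp_cf F f (wapp a b);
           P3 = (\<forall>n\<ge>1. \<exists>fn :: complex \<Rightarrow> complex.
                   (\<forall>z\<in>X. f z = jfrac (\<lambda>k. complex_of_real (a k)) (\<lambda>k. complex_of_real (b k)) 0 n z (fn z))
                   \<and> fn \<sim>[F] (\<lambda>z. complex_of_real (a (n+1)) / z));
           P4 = (\<forall>n. (\<lambda>z. f z - wapp a b n z) \<sim>[F]
                     (\<lambda>z. complex_of_real (\<Prod>k=1..n+1. a k) / z ^ (2*n+1)));
           P5 = (\<forall>n. (\<lambda>z. f z - wapp a b n z) \<in> O[F](\<lambda>z. inverse (z ^ (2*n+1))));
           P6 = infinite {n. (\<lambda>z. f z - wapp a b n z) \<in> O[F](\<lambda>z. inverse (z ^ (2*n+1)))};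
           P7 = (\<forall>n. rdeg (wrat a b n) \<le> n
                   \<and> (\<lambda>z. f z - reval (wrat a b n) z) \<in> O[F](\<lambda>z. inverse (z ^ (2*n+1)))
                   \<and> (\<forall>r. rdeg r \<le> n \<and> (\<lambda>z. f z - reval r z) \<in> O[F](\<lambda>z. inverse (z ^ (2*n+1)))
                          \<longrightarrow> r = wrat a b n));
           P8 = (\<forall>n\<ge>1.
                   (\<exists>g h :: complex poly. h \<noteq> 0 \<and> degree g \<le> n - 1 \<and> degree h \<le> n
                      \<and> (\<lambda>z. f z - poly g z / poly h z) \<in> O[F](\<lambda>z. inverse (z ^ (2*n+1)))
                      \<and> to_fract g / to_fract h = wrat a b n)
                 \<and> (\<forall>g h :: complex poly. h \<noteq> 0 \<and> degree g \<le> n - 1 \<and> degree h \<le> n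
                      \<and> (\<lambda>z. f z - poly g z / poly h z) \<in> O[F](\<lambda>z. inverse (z ^ (2*n+1)))
                      \<longrightarrow> to_fract g / to_fract h = wrat a b n))
       in (P1 \<longleftrightarrow> P2) \<and> (P2 \<longleftrightarrow> P3) \<and> (P3 \<longleftrightarrow> P4) \<and> (P4 \<longleftrightarrow> P5)
          \<and> (P5 \<longleftrightarrow> P6) \<and> (P6 \<longleftrightarrow> P7) \<and> (P7 \<longleftrightarrow> P8)))
    \<and> (\<forall>\<delta> \<epsilon> :: real. \<delta> > 0 \<and> \<epsilon> > 0 \<longrightarrow>
         asymp_cf (at_inf_within {z. \<delta> \<le> \<bar>Arg z\<bar> \<and> \<bar>Arg z\<bar> \<le> pi - \<epsilon>}) (stieltjes \<mu>) (wapp a b))"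
proof -
  have anz: "\<And>n. n \<ge> 1 \<Longrightarrow> a n \<noteq> 0" using a_pos by (metis less_irrefl)
  let ?c = "\<lambda>k. complex_of_real (moment \<mu> k)"
  have approx': "\<And>n. n \<ge> 1 \<Longrightarrow>
       (\<lambda>z. wapp a b n z - (\<Sum>k\<le>2*n-1. ?c k / z ^ (k+1))) \<in> o[at_infinity](\<lambda>z. inverse (z ^ (2*n)))"
    using approx by simp
  have part1: "\<not> bounded X \<longrightarrow>
      (let F = at_inf_within X;
           P1 = asymp_series F f (\<lambda>k. complex_of_real (moment \<mu> k));
           P2 = asymp_cf F f (wapp a b);
           P3 = (\<forall>n\<ge>1. \<exists>fn :: complex \<Rightarrow> complex.
                   (\<forall>z\<in>X. f z = jfrac (\<lambda>k. complex_of_real (a k)) (\<lambda>k. complex_of_real (b k)) 0 n z (fn z))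
                   \<and> fn \<sim>[F] (\<lambda>z. complex_of_real (a (n+1)) / z));
           P4 = (\<forall>n. (\<lambda>z. f z - wapp a b n z) \<sim>[F]
                     (\<lambda>z. complex_of_real (\<Prod>k=1..n+1. a k) / z ^ (2*n+1)));
           P5 = (\<forall>n. (\<lambda>z. f z - wapp a b n z) \<in> O[F](\<lambda>z. inverse (z ^ (2*n+1))));
           P6 = infinite {n. (\<lambda>z. f z - wapp a b n z) \<in> O[F](\<lambda>z. inverse (z ^ (2*n+1)))};
           P7 = (\<forall>n. rdeg (wrat a b n) \<le> n
                   \<and> (\<lambda>z. f z - reval (wrat a b n) z) \<in> O[F](\<lambda>z. inverse (z ^ (2*n+1)))
                   \<and> (\<forall>r. rdeg r \<le> n \<and> (\<lambda>z. f z - reval r z) \<in> O[F](\<lambda>z. inverse (z ^ (2*n+1)))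
                          \<longrightarrow> r = wrat a b n));
           P8 = (\<forall>n\<ge>1.
                   (\<exists>g h :: complex poly. h \<noteq> 0 \<and> degree g \<le> n - 1 \<and> degree h \<le> n
                      \<and> (\<lambda>z. f z - poly g z / poly h z) \<in> O[F](\<lambda>z. inverse (z ^ (2*n+1)))
                      \<and> to_fract g / to_fract h = wrat a b n)
                 \<and> (\<forall>g h :: complex poly. h \<noteq> 0 \<and> degree g \<le> n - 1 \<and> degree h \<le> n
                      \<and> (\<lambda>z. f z - poly g z / poly h z) \<in> O[F](\<lambda>z. inverse (z ^ (2*n+1)))
                      \<longrightarrow> to_fract g / to_fract h = wrat a b n))
       in (P1 \<longleftrightarrow> P2) \<and> (P2 \<longleftrightarrow> P3) \<and> (P3 \<longleftrightarrow> P4) \<and> (P4 \<longleftrightarrow> P5)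
          \<and> (P5 \<longleftrightarrow> P6) \<and> (P6 \<longleftrightarrow> P7) \<and> (P7 \<longleftrightarrow> P8))" for X f
  proof
    assume nb: "\<not> bounded X"
    define F where "F = at_inf_within X"
    have le: "F \<le> at_infinity" unfolding F_def by (rule at_inf_within_le)
    have nbot: "F \<noteq> bot" unfolding F_def by (rule nonbot[OF nb])
    note e1 = P1_iff[where a=a and b=b, OF anz le approx', of f]
    note e2 = P2_iff[where a=a and b=b, OF anz le, of f]
    note e3 = P3_iff[where a=a and b=b, OF anz, of X f, folded F_def]
    note e4 = P4_iff[where a=a and b=b, OF anz le, of f]
    note e6 = P6_iff[where a=a and b=b, OF anz le, of f]
    note e7 = P7_iff[where a=a and b=b, OF anz le nbot, of f]
    note e8 = P8_iff[where a=a and b=b, OF anz le nbot, of f]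
    show "let F = at_inf_within X;
           P1 = asymp_series F f (\<lambda>k. complex_of_real (moment \<mu> k));
           P2 = asymp_cf F f (wapp a b);
           P3 = (\<forall>n\<ge>1. \<exists>fn :: complex \<Rightarrow> complex.
                   (\<forall>z\<in>X. f z = jfrac (\<lambda>k. complex_of_real (a k)) (\<lambda>k. complex_of_real (b k)) 0 n z (fn z))
                   \<and> fn \<sim>[F] (\<lambda>z. complex_of_real (a (n+1)) / z));
           P4 = (\<forall>n. (\<lambda>z. f z - wapp a b n z) \<sim>[F]
                     (\<lambda>z. complex_of_real (\<Prod>k=1..n+1. a k) / z ^ (2*n+1)));
           P5 = (\<forall>n. (\<lambda>z. f z - wapp a b n z) \<in> O[F](\<lambda>z. inverse (z ^ (2*n+1))));
           P6 = infinite {n. (\<lambda>z. f z - wapp a b n z) \<in> O[F](\<lambda>z. inverse (z ^ (2*n+1)))};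
           P7 = (\<forall>n. rdeg (wrat a b n) \<le> n
                   \<and> (\<lambda>z. f z - reval (wrat a b n) z) \<in> O[F](\<lambda>z. inverse (z ^ (2*n+1)))
                   \<and> (\<forall>r. rdeg r \<le> n \<and> (\<lambda>z. f z - reval r z) \<in> O[F](\<lambda>z. inverse (z ^ (2*n+1)))
                          \<longrightarrow> r = wrat a b n));
           P8 = (\<forall>n\<ge>1.
                   (\<exists>g h :: complex poly. h \<noteq> 0 \<and> degree g \<le> n - 1 \<and> degree h \<le> n
                      \<and> (\<lambda>z. f z - poly g z / poly h z) \<in> O[F](\<lambda>z. inverse (z ^ (2*n+1)))
                      \<and> to_fract g / to_fract h = wrat a b n)
                 \<and> (\<forall>g h :: complex poly. h \<noteq> 0 \<and> degree g \<le> n - 1 \<and> degree h \<le> n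
                      \<and> (\<lambda>z. f z - poly g z / poly h z) \<in> O[F](\<lambda>z. inverse (z ^ (2*n+1)))
                      \<longrightarrow> to_fract g / to_fract h = wrat a b n))
       in (P1 \<longleftrightarrow> P2) \<and> (P2 \<longleftrightarrow> P3) \<and> (P3 \<longleftrightarrow> P4) \<and> (P4 \<longleftrightarrow> P5)
          \<and> (P5 \<longleftrightarrow> P6) \<and> (P6 \<longleftrightarrow> P7) \<and> (P7 \<longleftrightarrow> P8)"
      unfolding Let_def F_def[symmetric] by (simp only: e1 e2 e3 e4 e6 e7 e8)
  qed
  have part2: "asymp_cf (at_inf_within {z. \<delta> \<le> \<bar>Arg z\<bar> \<and> \<bar>Arg z\<bar> \<le> pi - \<epsilon>}) (stieltjes \<mu>) (wapp a b)"
    if "\<delta> > 0 \<and> \<epsilon> > 0" for \<delta> \<epsilon> :: real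
  proof -
    have S: "asymp_series (at_inf_within {z. \<delta> \<le> \<bar>Arg z\<bar> \<and> \<bar>Arg z\<bar> \<le> pi - \<epsilon>}) (stieltjes \<mu>) ?c"
      using stieltjes_series[OF sets_mu moments] that by blast
    show ?thesis
      using S P1_iff[where a=a and b=b, OF anz at_inf_within_le approx'] P2_iff[where a=a and b=b, OF anz at_inf_within_le]
      by blast
  qed
  show ?thesis using part1 part2 by blast
qed

end
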